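(* (a) Let $p\ge0$, let $\mathrm{X},\mathrm{Y}$ be locally compact Hausdorff spaces and let $T:C_0(\mathrm{X})_{+,1}\to C_0(\mathrm{Y})_{+,1}$ preserve the norm of the power mean $\mathfrak{m}^p$ of arbitrary finitely many elements, i.e. $\|Tf_1\,\mathfrak{m}^p\cdots\mathfrak{m}^p\,Tf_n\|=\|f_1\,\mathfrak{m}^p\cdots\mathfrak{m}^p\,f_n\|$ for all $n$ and $f_1,\dots,f_n$. (b) Or let $p<0$, let $\mathrm{X},\mathrm{Y}$ be compact Hausdorff spaces and let $T:C(\mathrm{X})^{-1}_{+,1}\to C(\mathrm{Y})^{-1}_{+,1}$ preserve the norm of $\mathfrak{m}^p$ of arbitrary finitely many elements. In either case there exist a locally compact subset $\mathrm{Y}_0\subset\mathrm{Y}$, which is closed if $\mathrm{X}$ is compact, and a surjective continuous map $\tau:\mathrm{Y}_0\to\mathrm{X}$ such that $(Tf)(y)=f(\tau(y))$ for all $y\in\mathrm{Y}_0$ and all $f$ in the domain of $T$. If moreover $T$ has norm-dense range, then $\mathrm{Y}_0=\mathrm{Y}$, $\tau$ is a homeomorphism of $\mathrm{Y}$ onto $\mathrm{X}$, and $T$ extends to an algebra $*$-isomorphism $C_0(\mathrm{X})\to C_0(\mathrm{Y})$ (namely $f\mapsto f\circ\tau$).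
   Context: $C_0(\mathrm{X})_{+,1}$ is the set of nonnegative continuous functions vanishing at infinity with sup-norm $1$; for compact $\mathrm{X}$, $C(\mathrm{X})^{-1}_{+,1}$ is the set of strictly positive continuous functions of sup-norm $1$. Power mean: for $p\neq0$, $f_1\,\mathfrak{m}^p\cdots\mathfrak{m}^p f_n=\big(\tfrac1n(f_1^p+\cdots+f_n^p)\big)^{1/p}$ pointwise; for $p=0$ it is the geometric mean $(f_1\cdots f_n)^{1/n}$. *)

theory Defs
  imports "HOL-Analysis.Analysis"
begin

text \<open>Functions on the topspace of a topological space, extended by 0 outside.\<close>

definition supn :: "'a topology \<Rightarrow> ('a \<Rightarrow> real) \<Rightarrow> real" where
  "supn X f = (if topspace X = {} then 0 else Sup ((\<lambda>x. \<bar>f x\<bar>) ` topspace X))"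

definition C0 :: "'a topology \<Rightarrow> ('a \<Rightarrow> real) set" where
  "C0 X = {f. continuous_map X euclideanreal f
              \<and> (\<forall>e>0. compactin X {x \<in> topspace X. \<bar>f x\<bar> \<ge> e})
              \<and> (\<forall>x. x \<notin> topspace X \<longrightarrow> f x = 0)}"

definition C0c :: "'a topology \<Rightarrow> ('a \<Rightarrow> complex) set" where
  "C0c X = {f. continuous_map X euclidean f
              \<and> (\<forall>e>0. compactin X {x \<in> topspace X. cmod (f x) \<ge> e})
              \<and> (\<forall>x. x \<notin> topspace X \<longrightarrow> f x = 0)}"

definition C0_pos1 :: "'a topology \<Rightarrow> ('a \<Rightarrow> real) set" where
  "C0_pos1 X = {f \<in> C0 X. (\<forall>x \<in> topspace X. f x \<ge> 0) \<and> supn X f = 1}"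

definition C_invpos1 :: "'a topology \<Rightarrow> ('a \<Rightarrow> real) set" where
  "C_invpos1 X = {f. continuous_map X euclideanreal f
                    \<and> (\<forall>x. x \<notin> topspace X \<longrightarrow> f x = 0)
                    \<and> (\<forall>x \<in> topspace X. f x > 0) \<and> supn X f = 1}"

definition Tdom :: "real \<Rightarrow> 'a topology \<Rightarrow> ('a \<Rightarrow> real) set" where
  "Tdom p X = (if p \<ge> 0 then C0_pos1 X else C_invpos1 X)"

definition pmean :: "real \<Rightarrow> ('a \<Rightarrow> real) list \<Rightarrow> 'a \<Rightarrow> real" where
  "pmean p fs x =
     (if p = 0 then (\<Prod>f\<leftarrow>fs. f x) powr (1 / real (length fs))
      else ((\<Sum>f\<leftarrow>fs. f x powr p) / real (length fs)) powr (1 / p))"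

definition star_alg_iso :: "'a topology \<Rightarrow> 'b topology \<Rightarrow> (('a \<Rightarrow> complex) \<Rightarrow> ('b \<Rightarrow> complex)) \<Rightarrow> bool" where
  "star_alg_iso X Y \<Phi> \<longleftrightarrow> bij_betw \<Phi> (C0c X) (C0c Y)
     \<and> (\<forall>f\<in>C0c X. \<forall>g\<in>C0c X. \<Phi> (\<lambda>x. f x + g x) = (\<lambda>y. \<Phi> f y + \<Phi> g y))
     \<and> (\<forall>f\<in>C0c X. \<forall>c. \<Phi> (\<lambda>x. c * f x) = (\<lambda>y. c * \<Phi> f y))
     \<and> (\<forall>f\<in>C0c X. \<forall>g\<in>C0c X. \<Phi> (\<lambda>x. f x * g x) = (\<lambda>y. \<Phi> f y * \<Phi> g y))
     \<and> (\<forall>f\<in>C0c X. \<Phi> (\<lambda>x. cnj (f x)) = (\<lambda>y. cnj (\<Phi> f y)))"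

end

theory Submission
  imports Defs
begin

definition pmv :: "real \<Rightarrow> real list \<Rightarrow> real" where
  "pmv p vs = (if p = 0 then prod_list vs powr (1 / real (length vs))
      else (sum_list (map (\<lambda>v. v powr p) vs) / real (length vs)) powr (1 / p))"

lemma pmean_pmv: "pmean p fs z = pmv p (map (\<lambda>f. f z) fs)"
  by (simp add: pmean_def pmv_def o_def)

definition inr :: "real \<Rightarrow> real \<Rightarrow> bool" where
  "inr p v \<longleftrightarrow> (if p \<ge> 0 then 0 \<le> v \<and> v \<le> 1 else 0 < v \<and> v \<le> 1)"

definition psi :: "real \<Rightarrow> real list \<Rightarrow> real" where
  "psi p vs = (if p > 0 then sum_list (map (\<lambda>v. v powr p) vs)
     else if p < 0 then - sum_list (map (\<lambda>v. v powr p) vs) else prod_list vs)"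

lemma inr_nonneg: "inr p v \<Longrightarrow> 0 \<le> v" by (auto simp: inr_def split: if_splits)
lemma inr_le1: "inr p v \<Longrightarrow> v \<le> 1" by (auto simp: inr_def split: if_splits)
lemma inr_pos: "inr p v \<Longrightarrow> p < 0 \<Longrightarrow> 0 < v" by (auto simp: inr_def split: if_splits)
lemma inr_one[simp]: "inr p 1" by (auto simp: inr_def)

lemma pmv_ge0: "0 \<le> pmv p vs" by (simp add: pmv_def)

lemma powr_le_iff_pos: fixes r a b :: real shows "0 < r \<Longrightarrow> 0 \<le> a \<Longrightarrow> 0 \<le> b \<Longrightarrow> a powr r \<le> b powr r \<longleftrightarrow> a \<le> b"
  using powr_mono2[of r a b] powr_less_mono2[of r b a] by (meson less_imp_le not_le)

lemma powr_le_iff_neg: fixes r a b :: real assumes "r < 0" "0 < a" "0 < b"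
  shows "a powr r \<le> b powr r \<longleftrightarrow> b \<le> a"
proof -
  have 1: "a powr r \<le> b powr r" if "b \<le> a" using powr_mono2'[of r b a] that assms by simp
  have 2: "b powr r < a powr r" if "a < b" using powr_less_mono2_neg[of r a b] that assms by simp
  show ?thesis using 1 2 by (meson not_le)
qed

lemma sum_powr_pos: fixes vs :: "real list" shows "vs \<noteq> [] \<Longrightarrow> \<forall>v\<in>set vs. 0 < v \<Longrightarrow> 0 < sum_list (map (\<lambda>v. v powr p) vs)"
proof (induction vs)
  case Nil then show ?case by simp
next
  case (Cons a vs)
  have "0 \<le> sum_list (map (\<lambda>v. v powr p) vs)" by (induction vs) (simp_all add: add_nonneg_nonneg)
  moreover have "0 < a powr p" using Cons.prems by auto
  ultimately show ?case by (metis add_pos_nonneg list.map(2) sum_list.Cons)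
qed

lemma sum_powr_nonneg: fixes vs :: "real list" shows "0 \<le> sum_list (map (\<lambda>v. v powr p) vs)"
  by (induction vs) (simp_all add: add_nonneg_nonneg)

lemma prod_list_nonneg': "\<forall>v\<in>set vs. 0 \<le> v \<Longrightarrow> 0 \<le> prod_list (vs::real list)"
  by (induction vs) auto

lemma pmv_le_iff:
  assumes "length vs = length ws" "vs \<noteq> []" "\<forall>v\<in>set vs. inr p v" "\<forall>v\<in>set ws. inr p v"
  shows "pmv p vs \<le> pmv p ws \<longleftrightarrow> psi p vs \<le> psi p ws"
proof -
  have n: "real (length vs) > 0" using assms(2) by simp
  have wsne: "ws \<noteq> []" using assms(1,2) by auto
  consider "p > 0" | "p < 0" | "p = 0" by linarith
  then show ?thesis
  proof cases
    case 1
    have "pmv p vs \<le> pmv p ws \<longleftrightarrow>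
       sum_list (map (\<lambda>v. v powr p) vs) / real (length vs) \<le> sum_list (map (\<lambda>v. v powr p) ws) / real (length vs)"
      using 1 assms(1) by (simp add: pmv_def powr_le_iff_pos sum_powr_nonneg)
    also have "\<dots> \<longleftrightarrow> psi p vs \<le> psi p ws" using 1 n by (simp add: psi_def divide_le_cancel)
    finally show ?thesis .
  next
    case 2
    have pv: "0 < sum_list (map (\<lambda>v. v powr p) vs)" using assms(2,3) 2 inr_pos sum_powr_pos by blast
    have pw: "0 < sum_list (map (\<lambda>v. v powr p) ws)" using wsne assms(4) 2 inr_pos sum_powr_pos by blast
    have "pmv p vs \<le> pmv p ws \<longleftrightarrow>
       sum_list (map (\<lambda>v. v powr p) ws) / real (length vs) \<le> sum_list (map (\<lambda>v. v powr p) vs) / real (length vs)"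
      using 2 assms(1) pv pw n by (simp add: pmv_def powr_le_iff_neg)
    also have "\<dots> \<longleftrightarrow> psi p vs \<le> psi p ws" using 2 n by (simp add: psi_def divide_le_cancel)
    finally show ?thesis .
  next
    case 3
    have "0 \<le> prod_list vs" "0 \<le> prod_list ws" using assms(3,4) inr_nonneg prod_list_nonneg' by blast+
    then show ?thesis using 3 assms(1) n by (simp add: pmv_def psi_def powr_le_iff_pos)
  qed
qed

lemma pmv_eq_iff:
  assumes "length vs = length ws" "vs \<noteq> []" "\<forall>v\<in>set vs. inr p v" "\<forall>v\<in>set ws. inr p v"
  shows "pmv p vs = pmv p ws \<longleftrightarrow> psi p vs = psi p ws"
proof -
  have "ws \<noteq> []" using assms by auto
  then show ?thesis using pmv_le_iff[OF assms] pmv_le_iff[of ws vs p] assms by (auto simp: order_eq_iff)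
qed

lemma psi_mono:
  assumes "\<forall>l\<in>set L. f l \<le> g l \<and> inr p (f l) \<and> inr p (g l)"
  shows "psi p (map f L) \<le> psi p (map g L)"
  using assms
proof (induction L)
  case Nil then show ?case by (simp add: psi_def)
next
  case (Cons a L)
  have IH: "psi p (map f L) \<le> psi p (map g L)" using Cons by simp
  have a: "f a \<le> g a" "inr p (f a)" "inr p (g a)" using Cons.prems by auto
  consider "p > 0" | "p < 0" | "p = 0" by linarith
  then show ?case
  proof cases
    case 1
    then have "f a powr p \<le> g a powr p" using a powr_mono2 inr_nonneg by simp
    then show ?thesis using IH 1 by (simp add: psi_def o_def)
  next
    case 2
    then have "g a powr p \<le> f a powr p" using a powr_mono2' inr_pos by simp
    then show ?thesis using IH 2 by (simp add: psi_def o_def)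
  next
    case 3
    have "0 \<le> prod_list (map f L)"
      using Cons.prems inr_nonneg by (intro prod_list_nonneg') auto
    moreover have "0 \<le> g a" using a inr_nonneg by blast
    ultimately show ?thesis using IH 3 a inr_nonneg
      by (simp add: psi_def mult_mono)
  qed
qed

lemma pmv_const: "n > 0 \<Longrightarrow> 0 \<le> c \<Longrightarrow> pmv p (replicate n c) = c"
proof -
  assume n: "n > 0" and c: "0 \<le> c"
  show ?thesis
  proof (cases "p = 0")
    case True
    have "prod_list (replicate n c) = c ^ n" by (simp add: prod_list_replicate)
    moreover have "(c ^ n) powr (1 / real n) = c"
    proof (cases "c = 0")
      case True then show ?thesis using n by simp
    next
      case False
      then have "c ^ n = c powr real n" using c by (simp add: powr_realpow)
      then show ?thesis using n c by (simp add: powr_powr)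
    qed
    ultimately show ?thesis using True by (simp add: pmv_def)
  next
    case False
    have "sum_list (map (\<lambda>v. v powr p) (replicate n c)) = real n * c powr p"
      by (simp add: sum_list_replicate)
    then show ?thesis using False n c by (simp add: pmv_def powr_powr)
  qed
qed

lemma pmv_le_Max:
  assumes "vs \<noteq> []" "\<forall>v\<in>set vs. inr p v"
  shows "pmv p vs \<le> Max (set vs)"
proof -
  let ?m = "Max (set vs)"
  have m: "?m \<in> set vs" using assms(1) by simp
  have mv: "\<forall>v\<in>set vs. v \<le> ?m" by simp
  have m0: "0 \<le> ?m" using m assms(2) inr_nonneg by blast
  have "psi p (map id vs) \<le> psi p (map (\<lambda>_. ?m) vs)"
    using assms m mv by (intro psi_mono) auto
  then have "pmv p vs \<le> pmv p (map (\<lambda>_. ?m) vs)"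
    using assms m by (subst pmv_le_iff) auto
  also have "map (\<lambda>_. ?m) vs = replicate (length vs) ?m" by (simp add: map_replicate_const)
  also have "pmv p (replicate (length vs) ?m) = ?m" using assms m0 by (intro pmv_const) auto
  finally show ?thesis .
qed

lemma pmv_le1:
  assumes "vs \<noteq> []" "\<forall>v\<in>set vs. inr p v"
  shows "pmv p vs \<le> 1"
  using pmv_le_Max[OF assms] assms inr_le1 by (metis Max_in List.finite_set order.trans set_empty)

lemma psi_append: "psi p (vs @ ws) = (if p = 0 then psi p vs * psi p ws else psi p vs + psi p ws)"
  by (auto simp: psi_def)

lemma psi_concat_pairs:
  "psi p (concat (map (\<lambda>f. [a f, b f]) fs)) =
     (if p = 0 then prod_list (map (\<lambda>f. psi p [a f, b f]) fs) else sum_list (map (\<lambda>f. psi p [a f, b f]) fs))"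
proof (induction fs)
  case Nil then show ?case by (simp add: psi_def)
next
  case (Cons f fs)
  have "concat (map (\<lambda>f. [a f, b f]) (f # fs)) = [a f, b f] @ concat (map (\<lambda>f. [a f, b f]) fs)" by simp
  then show ?case using Cons by (simp only: psi_append) auto
qed

lemma sum_forcing:
  fixes a b :: "'x \<Rightarrow> real"
  assumes "\<forall>f\<in>set fs. a f \<le> b f" "sum_list (map a fs) = sum_list (map b fs)"
  shows "\<forall>f\<in>set fs. a f = b f"
  using assms
proof (induction fs)
  case Nil then show ?case by simp
next
  case (Cons f fs)
  have "sum_list (map a fs) \<le> sum_list (map b fs)" using Cons.prems(1) by (intro sum_list_mono) auto
  moreover have "a f \<le> b f" using Cons.prems(1) by simp
  ultimately have af: "a f = b f" and eq: "sum_list (map a fs) = sum_list (map b fs)" using Cons.prems(2) by auto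
  have "\<forall>g\<in>set fs. a g = b g" by (rule Cons.IH) (use Cons.prems(1) eq in auto)
  then show ?case using af by simp
qed

lemma prod_forcing:
  fixes a b :: "'x \<Rightarrow> real"
  assumes "\<forall>f\<in>set fs. 0 \<le> a f \<and> a f \<le> b f \<and> 0 < b f" "prod_list (map a fs) = prod_list (map b fs)"
  shows "\<forall>f\<in>set fs. a f = b f"
  using assms
proof (induction fs)
  case Nil then show ?case by simp
next
  case (Cons f fs)
  have A: "0 \<le> prod_list (map a fs)" using Cons.prems(1) by (intro prod_list_nonneg') auto
  have B: "prod_list (map a fs) \<le> prod_list (map b fs)"
    using Cons.prems(1) by (induction fs) (auto intro!: mult_mono prod_list_nonneg')
  have C: "0 < prod_list (map b fs)" using Cons.prems(1) by (induction fs) auto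
  have f: "0 \<le> a f" "a f \<le> b f" "0 < b f" using Cons.prems(1) by auto
  have E: "a f * prod_list (map a fs) = b f * prod_list (map b fs)" using Cons.prems(2) by simp
  have "a f = b f"
  proof (rule ccontr)
    assume "a f \<noteq> b f" then have "a f < b f" using f by simp
    then have "a f * prod_list (map a fs) < b f * prod_list (map b fs)"
    proof -
      have "a f * prod_list (map a fs) \<le> a f * prod_list (map b fs)" using A B f by (simp add: mult_left_mono)
      also have "\<dots> < b f * prod_list (map b fs)" using C \<open>a f < b f\<close> by simp
      finally show ?thesis .
    qed
    then show False using E by simp
  qed
  then have eq: "prod_list (map a fs) = prod_list (map b fs)" using E f by simp
  have "\<forall>g\<in>set fs. a g = b g" by (rule Cons.IH) (use Cons.prems(1) eq in auto)
  then show ?case using \<open>a f = b f\<close> by simp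
qed

lemma cm_comp_on:
  assumes "continuous_map X euclideanreal g" "\<And>y. y \<in> topspace X \<Longrightarrow> g y \<in> S" "continuous_on S h"
  shows "continuous_map X euclideanreal (\<lambda>y. h (g y))"
proof -
  have "continuous_map X (top_of_set S) g"
    using assms(1,2) by (simp add: continuous_map_in_subtopology image_subset_iff)
  moreover have "continuous_map (top_of_set S) euclideanreal h" using assms(3) by simp
  ultimately show ?thesis using continuous_map_compose[of X "top_of_set S" g euclideanreal h]
    by (simp add: o_def)
qed

lemma cm_powr_nonneg:
  assumes "continuous_map X euclideanreal g" "\<forall>y\<in>topspace X. 0 \<le> g y" "0 < r"
  shows "continuous_map X euclideanreal (\<lambda>y. g y powr r)"
proof -
  have "continuous_on {0..} (\<lambda>t::real. t powr r)"
    using assms(3) by (intro continuous_on_powr') (auto intro: continuous_intros)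
  then show ?thesis using cm_comp_on[OF assms(1), of "{0..}"] assms(2) by auto
qed

lemma cm_powr_pos:
  assumes "continuous_map X euclideanreal g" "\<forall>y\<in>topspace X. 0 < g y"
  shows "continuous_map X euclideanreal (\<lambda>y. g y powr r)"
proof -
  have "continuous_on {0<..} (\<lambda>t::real. t powr r)"
    by (intro continuous_on_powr) (auto intro: continuous_intros)
  then show ?thesis using cm_comp_on[OF assms(1), of "{0<..}"] assms(2) by auto
qed

lemma cm_sum_list:
  assumes "\<forall>f\<in>set L. continuous_map X euclideanreal (h f)"
  shows "continuous_map X euclideanreal (\<lambda>y. sum_list (map (\<lambda>f. h f y) L) :: real)"
  using assms by (induction L) (auto intro: continuous_map_add)

lemma cm_prod_list:
  assumes "\<forall>f\<in>set L. continuous_map X euclideanreal (h f)"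
  shows "continuous_map X euclideanreal (\<lambda>y. prod_list (map (\<lambda>f. h f y) L) :: real)"
  using assms by (induction L) (auto intro: continuous_map_real_mult)

lemma cont_pmean:
  assumes ne: "fs \<noteq> []" and H: "\<forall>f\<in>set fs. continuous_map X euclideanreal f \<and> (\<forall>y\<in>topspace X. inr p (f y))"
  shows "continuous_map X euclideanreal (pmean p fs)"
proof -
  have n: "0 < real (length fs)" using ne by simp
  consider "p > 0" | "p < 0" | "p = 0" by linarith
  then show ?thesis
  proof cases
    case 1
    have c1: "continuous_map X euclideanreal (\<lambda>y. sum_list (map (\<lambda>f. f y powr p) fs))"
      using H 1 inr_nonneg by (intro cm_sum_list) (auto intro!: cm_powr_nonneg)
    have nn: "\<forall>y\<in>topspace X. 0 \<le> sum_list (map (\<lambda>f. f y powr p) fs) / real (length fs)"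
      by (auto intro!: divide_nonneg_nonneg sum_list_nonneg)
    have "continuous_map X euclideanreal (\<lambda>y. (sum_list (map (\<lambda>f. f y powr p) fs) / real (length fs)) powr (1/p))"
      using 1 n c1 nn by (intro cm_powr_nonneg continuous_map_real_divide) auto
    then show ?thesis using 1 by (simp add: pmean_def[abs_def])
  next
    case 2
    have c1: "continuous_map X euclideanreal (\<lambda>y. sum_list (map (\<lambda>f. f y powr p) fs))"
      using H 2 inr_pos by (intro cm_sum_list) (auto intro!: cm_powr_pos)
    have pos: "\<forall>y\<in>topspace X. 0 < sum_list (map (\<lambda>f. f y powr p) fs)"
    proof
      fix y assume y: "y \<in> topspace X"
      have "0 < sum_list (map (\<lambda>v. v powr p) (map (\<lambda>f. f y) fs))"
        using ne H y 2 inr_pos by (intro sum_powr_pos) auto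
      then show "0 < sum_list (map (\<lambda>f. f y powr p) fs)" by (simp add: o_def)
    qed
    have "continuous_map X euclideanreal (\<lambda>y. (sum_list (map (\<lambda>f. f y powr p) fs) / real (length fs)) powr (1/p))"
      using 2 n c1 pos by (intro cm_powr_pos continuous_map_real_divide) auto
    then show ?thesis using 2 by (simp add: pmean_def[abs_def])
  next
    case 3
    have c1: "continuous_map X euclideanreal (\<lambda>y. prod_list (map (\<lambda>f. f y) fs))"
      using H by (intro cm_prod_list) auto
    have nn: "\<forall>y\<in>topspace X. 0 \<le> prod_list (map (\<lambda>f. f y) fs)"
      by (intro ballI prod_list_nonneg') (use H inr_nonneg in fastforce)
    have "continuous_map X euclideanreal (\<lambda>y. prod_list (map (\<lambda>f. f y) fs) powr (1 / real (length fs)))"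
      using n c1 nn by (intro cm_powr_nonneg) auto
    then show ?thesis using 3 by (simp add: pmean_def[abs_def])
  qed
qed

lemma closed_ge:
  assumes "continuous_map X euclideanreal h"
  shows "closedin X {x \<in> topspace X. e \<le> h x}"
  using closedin_continuous_map_preimage[OF assms, of "{e..}"] by simp

lemma closed_eq:
  assumes "continuous_map X euclideanreal h"
  shows "closedin X {x \<in> topspace X. h x = e}"
  using closedin_continuous_map_preimage[OF assms, of "{e}"] by simp

lemma open_gt:
  assumes "continuous_map X euclideanreal h"
  shows "openin X {x \<in> topspace X. e < h x}"
  using openin_continuous_map_preimage[OF assms, of "{e<..}"] by simp

lemma open_lt:
  assumes "continuous_map X euclideanreal h"
  shows "openin X {x \<in> topspace X. h x < e}"
  using openin_continuous_map_preimage[OF assms, of "{..<e}"] by simp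

lemma supn_nonneg_eq: "\<forall>z\<in>topspace X. 0 \<le> h z \<Longrightarrow> topspace X \<noteq> {} \<Longrightarrow> supn X h = Sup (h ` topspace X)"
proof -
  assume "\<forall>z\<in>topspace X. 0 \<le> h z" "topspace X \<noteq> {}"
  then have "(\<lambda>x. \<bar>h x\<bar>) ` topspace X = h ` topspace X" by (auto intro!: image_cong)
  then show ?thesis using \<open>topspace X \<noteq> {}\<close> by (simp add: supn_def)
qed

lemma sup_attained:
  assumes cont: "continuous_map X euclideanreal h" and nn: "\<forall>z\<in>topspace X. 0 \<le> h z"
    and s: "supn X h = c" and c: "c > 0" and K: "compactin X {z\<in>topspace X. c/2 \<le> h z}"
  shows "(\<forall>z\<in>topspace X. h z \<le> c) \<and> (\<exists>z\<in>topspace X. h z = c)"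
proof -
  have ne: "topspace X \<noteq> {}" using s c by (auto simp: supn_def)
  let ?K = "{z\<in>topspace X. c/2 \<le> h z}"
  have S: "Sup (h ` topspace X) = c" using s supn_nonneg_eq[OF nn ne] by simp
  have "compact (h ` ?K)" using image_compactin[OF K cont] by simp
  then obtain B where B: "\<forall>v\<in>h ` ?K. v \<le> B"
    using compact_imp_bounded bounded_imp_bdd_above by (meson bdd_above_def)
  have bdd: "bdd_above (h ` topspace X)"
    unfolding bdd_above_def
  proof (intro exI ballI)
    fix v assume "v \<in> h ` topspace X"
    then obtain z where z: "z \<in> topspace X" "v = h z" by auto
    show "v \<le> max B (c/2)" using B z by (cases "c/2 \<le> h z") auto
  qed
  have "c/2 < Sup (h ` topspace X)" using S c by simp
  then have "\<exists>v\<in>h ` topspace X. c/2 < v"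
    using less_cSup_iff[of "h ` topspace X" "c/2"] bdd ne by blast
  then obtain z1 where z1: "z1 \<in> topspace X" "c/2 < h z1" by blast
  then have Kne: "h ` ?K \<noteq> {}" by auto
  obtain m where m: "m \<in> h ` ?K" "\<forall>v\<in>h ` ?K. v \<le> m"
    using compact_attains_sup[OF \<open>compact (h ` ?K)\<close> Kne] by blast
  then obtain z0 where z0: "z0 \<in> ?K" "m = h z0" by auto
  have all: "\<forall>z\<in>topspace X. h z \<le> h z0"
  proof
    fix z assume z: "z \<in> topspace X"
    show "h z \<le> h z0"
    proof (cases "c/2 \<le> h z")
      case True then show ?thesis using m z0 z by auto
    next
      case False then show ?thesis using z0 by auto
    qed
  qed
  have "Sup (h ` topspace X) = h z0"
    using z0 all by (intro cSup_eq_maximum) auto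
  then have "h z0 = c" using S by simp
  then show ?thesis using all z0 by auto
qed

lemma bump:
  assumes lc: "locally_compact_space X" and H: "Hausdorff_space X" and W: "openin X W" and x: "x \<in> W"
  obtains u K where "continuous_map X euclideanreal u" "u x = 1" "\<And>z. 0 \<le> u z \<and> u z \<le> 1"
    "\<And>z. z \<notin> W \<Longrightarrow> u z = 0" "compactin X K" "\<And>z. z \<notin> K \<Longrightarrow> u z = 0"
proof -
  have reg: "regular_space X" using lc H locally_compact_Hausdorff_imp_regular_space by blast
  then have nbase: "neighbourhood_base_of (\<lambda>C. compactin X C \<and> closedin X C) X"
    using lc locally_compact_regular_space_neighbourhood_base by blast
  then obtain U M where UM: "openin X U" "compactin X M" "closedin X M" "x \<in> U" "U \<subseteq> M" "M \<subseteq> W"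
    unfolding neighbourhood_base_of using W x by metis
  have cr: "completely_regular_space X"
    using lc H locally_compact_regular_imp_completely_regular_space by blast
  have xt: "x \<in> topspace X" using W x openin_subset by blast
  have cl: "closedin X (topspace X - U)" using UM(1) by blast
  have xn: "x \<in> topspace X - (topspace X - U)" using UM(4) xt by blast
  have "\<exists>f::'a\<Rightarrow>real. continuous_map X (top_of_set {0..1}) f \<and> f x = 0 \<and> f ` (topspace X - U) \<subseteq> {1}"
    using cr[unfolded completely_regular_space_def, rule_format, OF conjI[OF cl xn]] .
  then obtain f :: "'a \<Rightarrow> real" where f: "continuous_map X (top_of_set {0..1}) f" "f x = 0" "f ` (topspace X - U) \<subseteq> {1}"
    by (elim exE conjE)
  have fc: "continuous_map X euclideanreal f" using f(1) continuous_map_in_subtopology by blast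
  have fr: "\<forall>z\<in>topspace X. 0 \<le> f z \<and> f z \<le> 1"
    using f(1) by (auto simp: continuous_map_in_subtopology image_subset_iff)
  define u where "u z = (if z \<in> topspace X then 1 - f z else 0)" for z
  have uc: "continuous_map X euclideanreal u"
    by (rule continuous_map_eq[of _ _ "\<lambda>z. 1 - f z"]) (auto intro: continuous_intros fc simp: u_def)
  have uz: "u z = 0" if "z \<notin> U" for z using that f(3) by (auto simp: u_def)
  show ?thesis
  proof (rule that[OF uc, of M])
    show "u x = 1" using xt f(2) by (simp add: u_def)
    show "0 \<le> u z \<and> u z \<le> 1" for z using fr by (auto simp: u_def)
    show "u z = 0" if "z \<notin> W" for z using uz that UM by blast
    show "compactin X M" by fact
    show "u z = 0" if "z \<notin> M" for z using uz that UM by blast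
  qed
qed

definition spc :: "real \<Rightarrow> 'a topology \<Rightarrow> bool" where
  "spc p Z \<longleftrightarrow> Hausdorff_space Z \<and> (if p \<ge> 0 then locally_compact_space Z else compact_space Z)"

lemma spc_lc: "spc p Z \<Longrightarrow> locally_compact_space Z"
  by (auto simp: spc_def compact_imp_locally_compact_space split: if_splits)

lemma spc_H: "spc p Z \<Longrightarrow> Hausdorff_space Z" by (simp add: spc_def)

lemma Tdom_cases:
  "Tdom p Z = (if p \<ge> 0 then C0_pos1 Z else C_invpos1 Z)" by (simp add: Tdom_def)

lemma dom_cont: "f \<in> Tdom p Z \<Longrightarrow> continuous_map Z euclideanreal f"
  by (auto simp: Tdom_def C0_pos1_def C0_def C_invpos1_def split: if_splits)

lemma dom_off: "f \<in> Tdom p Z \<Longrightarrow> z \<notin> topspace Z \<Longrightarrow> f z = 0"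
  by (auto simp: Tdom_def C0_pos1_def C0_def C_invpos1_def split: if_splits)

lemma dom_supn: "f \<in> Tdom p Z \<Longrightarrow> supn Z f = 1"
  by (auto simp: Tdom_def C0_pos1_def C0_def C_invpos1_def split: if_splits)

lemma dom_nonneg: "f \<in> Tdom p Z \<Longrightarrow> z \<in> topspace Z \<Longrightarrow> 0 \<le> f z"
  by (auto simp: Tdom_def C0_pos1_def C0_def C_invpos1_def less_imp_le split: if_splits)

lemma dom_pos: "f \<in> Tdom p Z \<Longrightarrow> p < 0 \<Longrightarrow> z \<in> topspace Z \<Longrightarrow> 0 < f z"
  by (auto simp: Tdom_def C0_pos1_def C0_def C_invpos1_def split: if_splits)

lemma dom_superlevel:
  assumes "spc p Z" "f \<in> Tdom p Z" "e > 0"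
  shows "compactin Z {z \<in> topspace Z. e \<le> f z}"
proof (cases "p \<ge> 0")
  case True
  then have "compactin Z {z \<in> topspace Z. e \<le> \<bar>f z\<bar>}"
    using assms by (auto simp: Tdom_def C0_pos1_def C0_def)
  moreover have "{z \<in> topspace Z. e \<le> \<bar>f z\<bar>} = {z \<in> topspace Z. e \<le> f z}"
    using dom_nonneg[OF assms(2)] by force
  ultimately show ?thesis by simp
next
  case False
  then have "compact_space Z" using assms(1) by (simp add: spc_def)
  then show ?thesis using closed_ge[OF dom_cont[OF assms(2)]] closedin_compact_space by blast
qed

lemma dom_props:
  assumes "spc p Z" "f \<in> Tdom p Z"
  shows "(\<forall>z\<in>topspace Z. inr p (f z)) \<and> (\<exists>z\<in>topspace Z. f z = 1)"
proof -
  have "(\<forall>z\<in>topspace Z. f z \<le> 1) \<and> (\<exists>z\<in>topspace Z. f z = 1)"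
    using sup_attained[OF dom_cont[OF assms(2)] _ dom_supn[OF assms(2)] _ dom_superlevel[OF assms]]
      dom_nonneg[OF assms(2)] by auto
  then show ?thesis using dom_nonneg[OF assms(2)] dom_pos[OF assms(2)]
    by (auto simp: inr_def)
qed

lemma dom_inr: "spc p Z \<Longrightarrow> f \<in> Tdom p Z \<Longrightarrow> z \<in> topspace Z \<Longrightarrow> inr p (f z)"
  using dom_props by blast

lemma dom_le1: "spc p Z \<Longrightarrow> f \<in> Tdom p Z \<Longrightarrow> f z \<le> 1"
  by (metis dom_inr dom_off inr_le1 zero_le_one)

lemma dom_intro:
  assumes c: "continuous_map Z euclideanreal h" and off: "\<And>z. z \<notin> topspace Z \<Longrightarrow> h z = 0"
    and r: "\<And>z. z \<in> topspace Z \<Longrightarrow> inr p (h z)" and one: "zq \<in> topspace Z" "h zq = 1"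
    and sl: "p \<ge> 0 \<Longrightarrow> \<forall>e>0. compactin Z {z \<in> topspace Z. e \<le> h z}"
  shows "h \<in> Tdom p Z"
proof -
  have nn: "\<forall>z\<in>topspace Z. 0 \<le> h z" using r inr_nonneg by blast
  have s: "supn Z h = 1"
  proof -
    have ne: "topspace Z \<noteq> {}" using one by auto
    have "supn Z h = Sup (h ` topspace Z)" using supn_nonneg_eq[OF nn ne] .
    also have "\<dots> = 1" using one r inr_le1 by (intro cSup_eq_maximum) auto
    finally show ?thesis .
  qed
  show ?thesis
  proof (cases "p \<ge> 0")
    case True
    have "{z \<in> topspace Z. e \<le> \<bar>h z\<bar>} = {z \<in> topspace Z. e \<le> h z}" for e using nn by force
    then show ?thesis using True c off nn s sl by (auto simp: Tdom_def C0_pos1_def C0_def)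
  next
    case False
    then show ?thesis using c off r s by (auto simp: Tdom_def C_invpos1_def inr_def)
  qed
qed

lemma dom_bump:
  assumes sp: "spc p Z" and W: "openin Z W" and x: "x \<in> W" and eta: "0 < \<eta>" "\<eta> < 1"
  obtains u where "u \<in> Tdom p Z" "u x = 1" "\<And>z. z \<in> topspace Z \<Longrightarrow> z \<notin> W \<Longrightarrow> u z \<le> \<eta>"
    "p \<ge> 0 \<Longrightarrow> \<forall>z. z \<notin> W \<longrightarrow> u z = 0"
proof -
  obtain b K where b: "continuous_map Z euclideanreal b" "b x = 1" "\<And>z. 0 \<le> b z \<and> b z \<le> 1"
    "\<And>z. z \<notin> W \<Longrightarrow> b z = 0" "compactin Z K" "\<And>z. z \<notin> K \<Longrightarrow> b z = 0"
    using bump[OF spc_lc[OF sp] spc_H[OF sp] W x] by metis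
  have xt: "x \<in> topspace Z" using W x openin_subset by blast
  have Wt: "W \<subseteq> topspace Z" using W openin_subset by blast
  show ?thesis
  proof (cases "p \<ge> 0")
    case True
    have "b \<in> Tdom p Z"
    proof (rule dom_intro[OF b(1), where zq=x])
      show "b z = 0" if "z \<notin> topspace Z" for z using b(4) that Wt by blast
      show "inr p (b z)" for z using b(3) True by (simp add: inr_def)
      show "x \<in> topspace Z" "b x = 1" using xt b(2) by auto
      show "\<forall>e>0. compactin Z {z \<in> topspace Z. e \<le> b z}"
      proof (intro allI impI)
        fix e :: real assume "e > 0"
        then have "{z \<in> topspace Z. e \<le> b z} \<subseteq> K" using b(6) by force
        then show "compactin Z {z \<in> topspace Z. e \<le> b z}"
          using closed_compactin[OF b(5)] closed_ge[OF b(1)] by blast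
      qed
    qed
    then show ?thesis using that[of b] b True eta by auto
  next
    case False
    define u where "u z = (if z \<in> topspace Z then \<eta> + (1 - \<eta>) * b z else 0)" for z
    have uc: "continuous_map Z euclideanreal u"
      by (rule continuous_map_eq[of _ _ "\<lambda>z. \<eta> + (1 - \<eta>) * b z"])
        (auto intro!: continuous_map_add continuous_map_real_mult b(1) simp: u_def)
    have "u \<in> Tdom p Z"
    proof (rule dom_intro[OF uc, where zq=x])
      show "u z = 0" if "z \<notin> topspace Z" for z using that by (simp add: u_def)
      show "inr p (u z)" if "z \<in> topspace Z" for z
      proof -
        have "(1 - \<eta>) * b z \<le> (1 - \<eta>) * 1" using b(3)[of z] eta by (intro mult_left_mono) auto
        moreover have "0 \<le> (1 - \<eta>) * b z" using b(3)[of z] eta by simp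
        ultimately have "0 \<le> (1 - \<eta>) * b z" "\<eta> + (1 - \<eta>) * b z \<le> 1" by auto
        then show ?thesis using that eta False by (auto simp: u_def inr_def)
      qed
      show "x \<in> topspace Z" "u x = 1" using xt b(2) by (auto simp: u_def)
      show "\<forall>e>0. compactin Z {z \<in> topspace Z. e \<le> u z}" if "p \<ge> 0" using that False by simp
    qed
    moreover have "u z \<le> \<eta>" if "z \<in> topspace Z" "z \<notin> W" for z using that b(4) by (simp add: u_def)
    moreover have "u x = 1" using xt b(2) by (simp add: u_def)
    ultimately show ?thesis using that[of u] False by auto
  qed
qed

lemma supn_upper: "\<forall>z\<in>topspace Z. 0 \<le> h z \<and> h z \<le> B \<Longrightarrow> z \<in> topspace Z \<Longrightarrow> h z \<le> supn Z h"
proof -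
  assume a: "\<forall>z\<in>topspace Z. 0 \<le> h z \<and> h z \<le> B" and z: "z \<in> topspace Z"
  have nn: "\<forall>z\<in>topspace Z. 0 \<le> h z" using a by blast
  have "supn Z h = Sup (h ` topspace Z)" by (rule supn_nonneg_eq[OF nn]) (use z in auto)
  moreover have "bdd_above (h ` topspace Z)" using a by (auto intro!: bdd_aboveI2)
  ultimately show ?thesis using z by (simp add: cSup_upper)
qed

lemma supn_least: "\<forall>z\<in>topspace Z. 0 \<le> h z \<and> h z \<le> B \<Longrightarrow> topspace Z \<noteq> {} \<Longrightarrow> supn Z h \<le> B"
proof -
  assume a: "\<forall>z\<in>topspace Z. 0 \<le> h z \<and> h z \<le> B" and z: "topspace Z \<noteq> {}"
  have nn: "\<forall>z\<in>topspace Z. 0 \<le> h z" using a by blast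
  have "supn Z h = Sup (h ` topspace Z)" by (rule supn_nonneg_eq[OF nn]) (use z in auto)
  then show ?thesis using a z by (auto intro!: cSup_least)
qed

lemma supn_max: "\<forall>z\<in>topspace Z. 0 \<le> h z \<and> h z \<le> h z0 \<Longrightarrow> z0 \<in> topspace Z \<Longrightarrow> supn Z h = h z0"
proof -
  assume a: "\<forall>z\<in>topspace Z. 0 \<le> h z \<and> h z \<le> h z0" and z: "z0 \<in> topspace Z"
  have nn: "\<forall>z\<in>topspace Z. 0 \<le> h z" using a by blast
  have "supn Z h = Sup (h ` topspace Z)" by (rule supn_nonneg_eq[OF nn]) (use z in auto)
  also have "\<dots> = h z0" using a z by (intro cSup_eq_maximum) auto
  finally show ?thesis .
qed

lemma psi_pair: "psi p [a,b] = (if p > 0 then a powr p + b powr p else if p < 0 then -(a powr p + b powr p) else a * b)"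
  by (simp add: psi_def)

lemma pair_ge:
  assumes "inr p a" "inr p b" "inr p s" "psi p [s,1] \<le> psi p [a,b]"
  shows "s \<le> a"
proof -
  consider "p > 0" | "p < 0" | "p = 0" by linarith
  then show ?thesis
  proof cases
    case 1
    have "b powr p \<le> 1" using 1 assms(2) inr_nonneg inr_le1 by (intro powr_le1) auto
    then have "s powr p \<le> a powr p" using assms(4) 1 by (simp add: psi_pair)
    then show ?thesis using powr_le_iff_pos[of p s a] 1 assms inr_nonneg by blast
  next
    case 2
    have "1 powr p \<le> b powr p" using 2 assms(2) inr_pos inr_le1 by (intro powr_mono2') auto
    then have "a powr p \<le> s powr p" using assms(4) 2 by (simp add: psi_pair)
    then show ?thesis using powr_le_iff_neg[of p a s] 2 assms inr_pos by blast
  next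
    case 3
    have "a * b \<le> a" using assms(1,2) inr_nonneg inr_le1 by (simp add: mult_left_le)
    then show ?thesis using assms(4) 3 by (simp add: psi_pair)
  qed
qed

lemma pair_le:
  assumes "inr p a" "inr p s" "psi p [a,1] \<le> psi p [s,1]"
  shows "a \<le> s"
proof -
  consider "p > 0" | "p < 0" | "p = 0" by linarith
  then show ?thesis
  proof cases
    case 1
    then have "a powr p \<le> s powr p" using assms(3) by (simp add: psi_pair)
    then show ?thesis using powr_le_iff_pos[of p a s] 1 assms inr_nonneg by blast
  next
    case 2
    then have "s powr p \<le> a powr p" using assms(3) by (simp add: psi_pair)
    then show ?thesis using powr_le_iff_neg[of p s a] 2 assms inr_pos by blast
  next
    case 3
    then show ?thesis using assms(3) by (simp add: psi_pair)
  qed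
qed

lemma elem_le_sum_nonneg: fixes a :: real shows "a \<in> set (map (\<lambda>v. v powr p) vs) \<Longrightarrow> a \<le> sum_list (map (\<lambda>v. v powr p) vs)"
proof (induction vs)
  case Nil then show ?case by simp
next
  case (Cons w vs)
  have s0: "0 \<le> sum_list (map (\<lambda>v. v powr p) vs)" by (rule sum_powr_nonneg)
  have h: "0 \<le> w powr p" by simp
  from Cons.prems consider "a = w powr p" | "a \<in> set (map (\<lambda>v. v powr p) vs)" by auto
  then show ?case
  proof cases
    case 1 then show ?thesis using s0 by simp
  next
    case 2 then have "a \<le> sum_list (map (\<lambda>v. v powr p) vs)" by (rule Cons.IH)
    then show ?thesis by (simp only: list.map sum_list.Cons) (rule add_increasing[OF h])
  qed
qed

lemma pmv_pos:
  assumes "\<forall>v\<in>set vs. inr p v" "1 \<in> set vs" "p = 0 \<longrightarrow> (\<forall>v\<in>set vs. 0 < v)"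
  shows "0 < pmv p vs"
proof -
  have ne: "vs \<noteq> []" using assms(2) by auto
  consider "p > 0" | "p < 0" | "p = 0" by linarith
  then show ?thesis
  proof cases
    case 1
    have m: "1 powr p \<in> set (map (\<lambda>v. v powr p) vs)" using assms(2) by (auto intro!: image_eqI[where x=1])
    have "1 powr p \<le> sum_list (map (\<lambda>v. v powr p) vs)"
      using elem_le_sum_nonneg[OF m] by simp
    then have ps: "0 < sum_list (map (\<lambda>v. v powr p) vs)" by simp
    then show ?thesis using 1 ne by (simp add: pmv_def)
  next
    case 2
    have "0 < sum_list (map (\<lambda>v. v powr p) vs)"
      using ne assms(1) 2 inr_pos by (intro sum_powr_pos) auto
    then show ?thesis using 2 ne by (simp add: pmv_def)
  next
    case 3
    have "0 < prod_list vs" using assms(3) 3 by (induction vs) auto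
    then show ?thesis using 3 by (simp add: pmv_def)
  qed
qed

lemma prod_list_mono':
  fixes a b :: "'x \<Rightarrow> real"
  assumes "\<forall>f\<in>set fs. 0 \<le> a f \<and> a f \<le> b f"
  shows "prod_list (map a fs) \<le> prod_list (map b fs)"
  using assms by (induction fs) (auto intro!: mult_mono prod_list_nonneg')

lemma inr_mult: "inr p a \<Longrightarrow> inr p b \<Longrightarrow> inr p (a * b)"
  by (auto simp: inr_def mult_le_one split: if_splits)

definition Gf :: "real \<Rightarrow> ('a \<Rightarrow> real) \<Rightarrow> 'a \<Rightarrow> ('a \<Rightarrow> real) \<Rightarrow> 'a \<Rightarrow> real" where
  "Gf p u0 x f z = (if p > 0 then u0 z * (min 1 (1 + f x powr p - f z powr p)) powr (1/p)
     else if p < 0 then u0 z * (max 1 (1 + f x powr p - f z powr p)) powr (1/p)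
     else u0 z * min 1 (f x / max (f z) (f x)))"

lemma mult_dom:
  assumes sp: "spc p Z" and u0: "u0 \<in> Tdom p Z" "u0 x = 1" and x: "x \<in> topspace Z"
    and H: "continuous_map Z euclideanreal H" "\<And>z. z \<in> topspace Z \<Longrightarrow> inr p (H z)" "H x = 1"
  shows "(\<lambda>z. u0 z * H z) \<in> Tdom p Z"
proof (rule dom_intro[where zq = x])
  show "continuous_map Z euclideanreal (\<lambda>z. u0 z * H z)"
    using dom_cont[OF u0(1)] H(1) by (intro continuous_map_real_mult)
  show "u0 z * H z = 0" if "z \<notin> topspace Z" for z using dom_off[OF u0(1) that] by simp
  show "inr p (u0 z * H z)" if "z \<in> topspace Z" for z
    using inr_mult dom_inr[OF sp u0(1) that] H(2)[OF that] by blast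
  show "x \<in> topspace Z" "u0 x * H x = 1" using x u0 H by auto
  show "\<forall>e>0. compactin Z {z \<in> topspace Z. e \<le> u0 z * H z}"
  proof (intro allI impI)
    fix e :: real assume e: "e > 0"
    have sub: "{z \<in> topspace Z. e \<le> u0 z * H z} \<subseteq> {z \<in> topspace Z. e \<le> u0 z}"
    proof clarify
      fix z assume z: "z \<in> topspace Z" "e \<le> u0 z * H z"
      have "u0 z * H z \<le> u0 z" using dom_inr[OF sp u0(1) z(1)] H(2)[OF z(1)] inr_nonneg inr_le1
        by (simp add: mult_left_le)
      then show "e \<le> u0 z" using z by simp
    qed
    have "continuous_map Z euclideanreal (\<lambda>z. u0 z * H z)"
      using dom_cont[OF u0(1)] H(1) by (intro continuous_map_real_mult)
    then show "compactin Z {z \<in> topspace Z. e \<le> u0 z * H z}"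
      using closed_compactin[OF dom_superlevel[OF sp u0(1) e] sub] closed_ge by blast
  qed
qed

lemma G_props:
  assumes sp: "spc p Z" and u0: "u0 \<in> Tdom p Z" "u0 x = 1" and x: "x \<in> topspace Z"
    and f: "f \<in> Tdom p Z" "p = 0 \<longrightarrow> 0 < f x"
  shows "Gf p u0 x f \<in> Tdom p Z \<and> Gf p u0 x f x = 1 \<and>
         (\<forall>z\<in>topspace Z. psi p [f z, Gf p u0 x f z] \<le> psi p [f x, 1])"
proof -
  let ?s = "f x"
  have fc: "continuous_map Z euclideanreal f" using dom_cont[OF f(1)] .
  have fr: "\<And>z. z \<in> topspace Z \<Longrightarrow> inr p (f z)" using dom_inr[OF sp f(1)] .
  have ur: "\<And>z. z \<in> topspace Z \<Longrightarrow> inr p (u0 z)" using dom_inr[OF sp u0(1)] .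
  have sr: "inr p ?s" using fr x .
  consider "p > 0" | "p < 0" | "p = 0" by linarith
  then show ?thesis
  proof cases
    case 1
    define H where "H z = (min 1 (1 + ?s powr p - f z powr p)) powr (1/p)" for z
    have G: "Gf p u0 x f = (\<lambda>z. u0 z * H z)" using 1 by (auto simp: Gf_def H_def fun_eq_iff)
    have fp1: "f z powr p \<le> 1" if "z \<in> topspace Z" for z
      using fr[OF that] 1 inr_nonneg inr_le1 by (intro powr_le1) auto
    have mn: "0 \<le> min 1 (1 + ?s powr p - f z powr p)" if "z \<in> topspace Z" for z
    proof -
      have "0 \<le> 1 + ?s powr p - f z powr p" using fp1[OF that] powr_ge_zero[of "f x" p] by linarith
      then show ?thesis by simp
    qed
    have Hc: "continuous_map Z euclideanreal H"
    proof -
      have "continuous_map Z euclideanreal (\<lambda>z. f z powr p)"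
        using fc fr inr_nonneg 1 by (intro cm_powr_nonneg) auto
      then have "continuous_map Z euclideanreal (\<lambda>z. min 1 (1 + ?s powr p - f z powr p))"
        by (intro continuous_map_real_min continuous_map_add continuous_map_diff) auto
      then show ?thesis unfolding H_def using mn 1 by (intro cm_powr_nonneg) auto
    qed
    have Hr: "inr p (H z)" if "z \<in> topspace Z" for z
      using mn[OF that] 1 by (auto simp: H_def inr_def intro!: powr_le1)
    have Hx: "H x = 1" by (simp add: H_def)
    have ineq: "psi p [f z, u0 z * H z] \<le> psi p [?s, 1]" if z: "z \<in> topspace Z" for z
    proof -
      have e1: "(u0 z * H z) powr p = u0 z powr p * H z powr p"
        using ur[OF z] Hr[OF z] inr_nonneg by (simp add: powr_mult)
      have e2: "H z powr p = min 1 (1 + ?s powr p - f z powr p)"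
        using mn[OF z] 1 by (simp add: H_def powr_powr powr_one)
      have u1: "u0 z powr p \<le> 1" using ur[OF z] 1 inr_nonneg inr_le1 by (intro powr_le1) auto
      have "u0 z powr p * min 1 (1 + ?s powr p - f z powr p) \<le> min 1 (1 + ?s powr p - f z powr p)"
        by (rule mult_left_le_one_le[OF mn[OF z]]) (use u1 in auto)
      moreover have "min 1 (1 + ?s powr p - f z powr p) \<le> 1 + ?s powr p - f z powr p" by simp
      moreover have "(u0 z * H z) powr p = u0 z powr p * min 1 (1 + ?s powr p - f z powr p)" using e1 e2 by simp
      ultimately have "(u0 z * H z) powr p \<le> 1 + ?s powr p - f z powr p" by linarith
      then show ?thesis using 1 by (simp add: psi_pair)
    qed
    show ?thesis using G mult_dom[OF sp u0 x Hc Hr Hx] ineq u0(2) Hx by simp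
  next
    case 2
    define H where "H z = (max 1 (1 + ?s powr p - f z powr p)) powr (1/p)" for z
    have G: "Gf p u0 x f = (\<lambda>z. u0 z * H z)" using 2 by (auto simp: Gf_def H_def fun_eq_iff)
    have Hc: "continuous_map Z euclideanreal H"
    proof -
      have "continuous_map Z euclideanreal (\<lambda>z. f z powr p)"
        using fc fr inr_pos 2 by (intro cm_powr_pos) auto
      then have "continuous_map Z euclideanreal (\<lambda>z. max 1 (1 + ?s powr p - f z powr p))"
        by (intro continuous_map_real_max continuous_map_add continuous_map_diff) auto
      then show ?thesis unfolding H_def by (intro cm_powr_pos) auto
    qed
    have Hr: "inr p (H z)" if "z \<in> topspace Z" for z
    proof -
      have "H z \<le> 1 powr (1/p)" unfolding H_def using 2 by (intro powr_mono2') auto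
      then show ?thesis using 2 by (auto simp: H_def inr_def)
    qed
    have Hx: "H x = 1" by (simp add: H_def)
    have ineq: "psi p [f z, u0 z * H z] \<le> psi p [?s, 1]" if z: "z \<in> topspace Z" for z
    proof -
      have "(u0 z * H z) powr p = u0 z powr p * H z powr p"
        using ur[OF z] Hr[OF z] inr_nonneg by (simp add: powr_mult)
      also have "H z powr p = max 1 (1 + ?s powr p - f z powr p)"
        using 2 by (simp add: H_def powr_powr powr_one)
      finally have e: "(u0 z * H z) powr p = u0 z powr p * max 1 (1 + ?s powr p - f z powr p)" .
      have "1 powr p \<le> u0 z powr p" using ur[OF z] 2 inr_pos inr_le1 by (intro powr_mono2') auto
      then have "max 1 (1 + ?s powr p - f z powr p) \<le> u0 z powr p * max 1 (1 + ?s powr p - f z powr p)"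
        by (simp add: mult_le_cancel_right1)
      then have "1 + ?s powr p - f z powr p \<le> (u0 z * H z) powr p" using e by linarith
      then show ?thesis using 2 by (simp add: psi_pair)
    qed
    show ?thesis using G mult_dom[OF sp u0 x Hc Hr Hx] ineq u0(2) Hx by simp
  next
    case 3
    have s0: "0 < ?s" using f(2) 3 by simp
    define H where "H z = min 1 (?s / max (f z) ?s)" for z
    have G: "Gf p u0 x f = (\<lambda>z. u0 z * H z)" using 3 by (auto simp: Gf_def H_def fun_eq_iff)
    have Hc: "continuous_map Z euclideanreal H"
      unfolding H_def using s0
      by (intro continuous_map_real_min continuous_map_real_divide continuous_map_real_max fc) auto
    have Hr: "inr p (H z)" if "z \<in> topspace Z" for z
      using 3 s0 by (auto simp: H_def inr_def)
    have Hx: "H x = 1" using s0 by (simp add: H_def)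
    have ineq: "psi p [f z, u0 z * H z] \<le> psi p [?s, 1]" if z: "z \<in> topspace Z" for z
    proof -
      have fz: "0 \<le> f z" using fr[OF z] inr_nonneg by blast
      have u: "0 \<le> u0 z" "u0 z \<le> 1" using ur[OF z] inr_nonneg inr_le1 by auto
      have h0: "0 \<le> H z" using Hr[OF z] inr_nonneg by blast
      have "f z * (u0 z * H z) \<le> f z * H z"
        using fz u h0 by (simp add: mult_left_mono mult_left_le_one_le)
      also have "\<dots> \<le> f z * (?s / max (f z) ?s)" using fz unfolding H_def by (intro mult_left_mono) auto
      also have "\<dots> \<le> ?s"
      proof -
        have eq: "f z * (?s / max (f z) ?s) = ?s * (f z / max (f z) ?s)" by simp
        have q: "f z / max (f z) ?s \<le> 1" using s0 fz by simp
        have "?s * (f z / max (f z) ?s) \<le> ?s * 1" by (rule mult_left_mono[OF q]) (use s0 in simp)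
        then show ?thesis using eq by linarith
      qed
      finally show ?thesis using 3 by (simp add: psi_pair)
    qed
    show ?thesis using G mult_dom[OF sp u0 x Hc Hr Hx] ineq u0(2) Hx by simp
  qed
qed

locale setting =
  fixes p :: real and X :: "'a topology" and Y :: "'b topology"
    and T :: "('a \<Rightarrow> real) \<Rightarrow> ('b \<Rightarrow> real)"
  assumes HX: "Hausdorff_space X" and HY: "Hausdorff_space Y"
    and spX: "if p \<ge> 0 then locally_compact_space X else compact_space X"
    and spY: "if p \<ge> 0 then locally_compact_space Y else compact_space Y"
    and Tmap: "T ` Tdom p X \<subseteq> Tdom p Y"
    and Tpres: "\<And>fs. fs \<noteq> [] \<Longrightarrow> set fs \<subseteq> Tdom p X \<Longrightarrow>
                  supn Y (pmean p (map T fs)) = supn X (pmean p fs)"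
begin

lemma sX: "spc p X" using HX spX by (simp add: spc_def)
lemma sY: "spc p Y" using HY spY by (simp add: spc_def)
lemma TD: "f \<in> Tdom p X \<Longrightarrow> T f \<in> Tdom p Y" using Tmap by blast

lemma sup_X_at:
  assumes "fs \<noteq> []" "set fs \<subseteq> Tdom p X" "x \<in> topspace X"
    "\<forall>z\<in>topspace X. psi p (map (\<lambda>f. f z) fs) \<le> psi p (map (\<lambda>f. f x) fs)"
  shows "supn X (pmean p fs) = pmean p fs x"
proof (rule supn_max[OF _ assms(3)], intro ballI conjI)
  fix z assume z: "z \<in> topspace X"
  show "0 \<le> pmean p fs z" by (simp add: pmean_pmv pmv_ge0)
  have r: "\<forall>v\<in>set (map (\<lambda>f. f w) fs). inr p v" if "w \<in> topspace X" for w
    using assms(2) dom_inr[OF sX] that by auto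
  show "pmean p fs z \<le> pmean p fs x"
    unfolding pmean_pmv using assms(1,4) z r[OF z] r[OF assms(3)] by (subst pmv_le_iff) auto
qed

lemma Tvals: "set fs \<subseteq> Tdom p X \<Longrightarrow> y \<in> topspace Y \<Longrightarrow> \<forall>v\<in>set (map (\<lambda>g. g y) (map T fs)). inr p v"
  using dom_inr[OF sY] TD by auto

lemma Xvals: "set fs \<subseteq> Tdom p X \<Longrightarrow> z \<in> topspace X \<Longrightarrow> \<forall>v\<in>set (map (\<lambda>g. g z) fs). inr p v"
  using dom_inr[OF sX] by auto

lemma Y_le:
  assumes "fs \<noteq> []" "set fs \<subseteq> Tdom p X" "y \<in> topspace Y"
  shows "pmean p (map T fs) y \<le> supn Y (pmean p (map T fs))"
proof (rule supn_upper[OF _ assms(3), where B=1], intro ballI conjI)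
  fix z assume z: "z \<in> topspace Y"
  show "0 \<le> pmean p (map T fs) z" by (simp add: pmean_pmv pmv_ge0)
  show "pmean p (map T fs) z \<le> 1" unfolding pmean_pmv using pmv_le1 Tvals[OF assms(2) z] assms(1) by simp
qed

lemma Y_attain:
  assumes "fs \<noteq> []" "set fs \<subseteq> Tdom p X" "supn Y (pmean p (map T fs)) = c" "c > 0"
  shows "\<exists>y\<in>topspace Y. pmean p (map T fs) y = c"
proof -
  let ?h = "pmean p (map T fs)"
  have cont: "continuous_map Y euclideanreal ?h"
    using assms(1,2) by (intro cont_pmean) (auto intro: dom_cont[OF TD] dom_inr[OF sY TD])
  have nn: "\<forall>z\<in>topspace Y. 0 \<le> ?h z" by (simp add: pmean_pmv pmv_ge0)
  have K: "compactin Y {z \<in> topspace Y. c/2 \<le> ?h z}"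
  proof (cases "p \<ge> 0")
    case False
    then have "compact_space Y" using spY by simp
    then show ?thesis using closed_ge[OF cont] closedin_compact_space by blast
  next
    case True
    let ?U = "(\<lambda>g. {z \<in> topspace Y. c/2 \<le> g z}) ` set (map T fs)"
    have c2: "0 < c/2" using assms(4) by simp
    have each: "compactin Y {z \<in> topspace Y. c/2 \<le> g z}" if g: "g \<in> set (map T fs)" for g
    proof -
      obtain f where f: "f \<in> set fs" "g = T f" using g by auto
      then have "f \<in> Tdom p X" using assms(2) by auto
      from dom_superlevel[OF sY TD[OF this] c2] f(2) show ?thesis by simp
    qed
    have "compactin Y (\<Union>?U)"
      using each by (intro compactin_Union) auto
    moreover have "{z \<in> topspace Y. c/2 \<le> ?h z} \<subseteq> \<Union>?U"
    proof clarify
      fix z assume z: "z \<in> topspace Y" "c/2 \<le> ?h z"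
      let ?vs = "map (\<lambda>g. g z) (map T fs)"
      have "pmv p ?vs \<le> Max (set ?vs)" by (rule pmv_le_Max) (use Tvals[OF assms(2) z(1)] assms(1) in auto)
      then have "?h z \<le> Max (set ?vs)" by (simp only: pmean_pmv)
      moreover have "Max (set ?vs) \<in> set ?vs" using assms(1) by (intro Max_in) auto
      then obtain f where f: "f \<in> set fs" "Max (set ?vs) = T f z" by auto
      have "c/2 \<le> T f z" using \<open>?h z \<le> Max (set ?vs)\<close> z(2) f(2) by linarith
      then show "z \<in> \<Union>?U" using z(1) f(1) by auto
    qed
    ultimately show ?thesis using closed_compactin closed_ge[OF cont] by blast
  qed
  show ?thesis using sup_attained[OF cont nn assms(3,4) K] by blast
qed

lemma map_concat_pairs: "map (\<lambda>g. g z) (concat (map (\<lambda>f. [f, G f]) fs)) = concat (map (\<lambda>f. [f z, G f z]) fs)"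
  by (induction fs) auto

lemma map_concat_pairsT: "map (\<lambda>g. g z) (map T (concat (map (\<lambda>f. [f, G f]) fs))) = concat (map (\<lambda>f. [T f z, T (G f) z]) fs)"
  by (induction fs) auto

lemma length_concat_pairs: "length (concat (map (\<lambda>f. [a f, b f]) fs)) = 2 * length fs"
  by (induction fs) auto

lemma pair_sup:
  assumes x: "x \<in> topspace X" and f: "f \<in> Tdom p X" and g: "g \<in> Tdom p X" and gx: "g x = 1"
    and ineq: "\<forall>z\<in>topspace X. psi p [f z, g z] \<le> psi p [f x, 1]" and y: "y \<in> topspace Y"
  shows "psi p [T f y, T g y] \<le> psi p [f x, 1]"
proof -
  have "supn X (pmean p [f, g]) = pmean p [f, g] x"
    using x f g ineq gx by (intro sup_X_at) auto
  moreover have "pmean p (map T [f, g]) y \<le> supn Y (pmean p (map T [f, g]))"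
    using f g y by (intro Y_le) auto
  moreover have "supn Y (pmean p (map T [f, g])) = supn X (pmean p [f, g])"
    using f g by (intro Tpres) auto
  ultimately have "pmv p [T f y, T g y] \<le> pmv p [f x, 1]" using gx by (simp add: pmean_pmv)
  moreover have "inr p (T f y)" "inr p (T g y)" using y dom_inr[OF sY TD] f g by auto
  moreover have "inr p (f x)" using dom_inr[OF sX f x] .
  ultimately show ?thesis by (subst (asm) pmv_le_iff) auto
qed

lemma fip:
  assumes x: "x \<in> topspace X" and u0: "u0 \<in> Tdom p X" "u0 x = 1"
    and fs: "fs \<noteq> []" "set fs \<subseteq> Tdom p X" "\<forall>f\<in>set fs. p = 0 \<longrightarrow> 0 < f x"
  shows "\<exists>y\<in>topspace Y. \<forall>f\<in>set fs. f x \<le> T f y"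
proof -
  let ?G = "Gf p u0 x"
  have Gp: "\<And>f. f \<in> set fs \<Longrightarrow> ?G f \<in> Tdom p X \<and> ?G f x = 1 \<and>
         (\<forall>z\<in>topspace X. psi p [f z, ?G f z] \<le> psi p [f x, 1])"
    using G_props[OF sX u0 x] fs by blast
  define L where "L = concat (map (\<lambda>f. [f, ?G f]) fs)"
  have Lne: "L \<noteq> []" using fs(1) by (cases fs) (auto simp: L_def)
  have setL: "set L \<subseteq> Tdom p X" using fs(2) Gp by (auto simp: L_def)
  have len: "length (map (\<lambda>g. g z) L) = length (map (\<lambda>g. g w) (map T L))" for z w by simp
  have Lz: "map (\<lambda>g. g z) L = concat (map (\<lambda>f. [f z, ?G f z]) fs)" for z
    unfolding L_def by (rule map_concat_pairs)
  have TLz: "map (\<lambda>g. g z) (map T L) = concat (map (\<lambda>f. [T f z, T (?G f) z]) fs)" for z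
    unfolding L_def by (rule map_concat_pairsT)
  have Lx: "map (\<lambda>g. g x) L = concat (map (\<lambda>f. [f x, 1]) fs)"
    unfolding Lz using Gp by (induction fs) auto
  have pairnn: "0 \<le> psi p [a, b]" if "p = 0" "inr p a" "inr p b" for a b
    using that inr_nonneg by (simp add: psi_pair)
  have ptw: "\<forall>z\<in>topspace X. psi p (map (\<lambda>g. g z) L) \<le> psi p (map (\<lambda>g. g x) L)"
  proof
    fix z assume z: "z \<in> topspace X"
    have b: "\<forall>f\<in>set fs. psi p [f z, ?G f z] \<le> psi p [f x, 1]" using Gp z by blast
    show "psi p (map (\<lambda>g. g z) L) \<le> psi p (map (\<lambda>g. g x) L)"
    proof (cases "p = 0")
      case True
      have "\<forall>f\<in>set fs. 0 \<le> psi p [f z, ?G f z] \<and> psi p [f z, ?G f z] \<le> psi p [f x, 1]"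
        using b pairnn[OF True] dom_inr[OF sX] Gp fs(2) z by blast
      then show ?thesis unfolding Lx unfolding Lz psi_concat_pairs using True by (simp add: prod_list_mono')
    next
      case False
      then show ?thesis unfolding Lx unfolding Lz psi_concat_pairs using b by (simp add: sum_list_mono)
    qed
  qed
  have supX: "supn X (pmean p L) = pmean p L x" using sup_X_at[OF Lne setL x ptw] .
  define c where "c = pmean p L x"
  have c0: "0 < c"
  proof -
    have "\<forall>v\<in>set (map (\<lambda>g. g x) L). inr p v" using Xvals[OF setL x] .
    moreover have "1 \<in> set (map (\<lambda>g. g x) L)" using fs(1) unfolding Lx by (cases fs) auto
    moreover have "p = 0 \<longrightarrow> (\<forall>v\<in>set (map (\<lambda>g. g x) L). 0 < v)" using fs(3) unfolding Lx by auto
    ultimately show ?thesis unfolding c_def pmean_pmv by (rule pmv_pos)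
  qed
  have supY: "supn Y (pmean p (map T L)) = c" using Tpres[OF Lne setL] supX c_def by simp
  obtain y where y: "y \<in> topspace Y" "pmean p (map T L) y = c" using Y_attain[OF Lne setL supY c0] by blast
  have eqpsi: "psi p (map (\<lambda>g. g y) (map T L)) = psi p (map (\<lambda>g. g x) L)"
  proof -
    have "pmv p (map (\<lambda>g. g y) (map T L)) = pmv p (map (\<lambda>g. g x) L)"
      using y(2) c_def by (simp add: pmean_pmv)
    then show ?thesis using Tvals[OF setL y(1)] Xvals[OF setL x] Lne
      by (subst (asm) pmv_eq_iff) auto
  qed
  have bnd: "\<forall>f\<in>set fs. psi p [T f y, T (?G f) y] \<le> psi p [f x, 1]"
    using pair_sup[OF x _ _ _ _ y(1)] Gp fs(2) by blast
  have each: "\<forall>f\<in>set fs. psi p [T f y, T (?G f) y] = psi p [f x, 1]"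
  proof (cases "p = 0")
    case True
    have "\<forall>f\<in>set fs. 0 \<le> psi p [T f y, T (?G f) y] \<and> psi p [T f y, T (?G f) y] \<le> psi p [f x, 1]
            \<and> 0 < psi p [f x, 1]"
      using bnd pairnn[OF True] dom_inr[OF sY TD] Gp fs y(1) True by (auto simp: psi_pair)
    moreover have "prod_list (map (\<lambda>f. psi p [T f y, T (?G f) y]) fs) = prod_list (map (\<lambda>f. psi p [f x, 1]) fs)"
      using eqpsi unfolding TLz Lx psi_concat_pairs using True by simp
    ultimately show ?thesis by (rule prod_forcing)
  next
    case False
    have "sum_list (map (\<lambda>f. psi p [T f y, T (?G f) y]) fs) = sum_list (map (\<lambda>f. psi p [f x, 1]) fs)"
      using eqpsi unfolding TLz Lx psi_concat_pairs using False by simp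
    then show ?thesis by (rule sum_forcing[OF bnd])
  qed
  show ?thesis
  proof (intro bexI[OF _ y(1)] ballI)
    fix f assume f: "f \<in> set fs"
    show "f x \<le> T f y"
      using pair_ge each f dom_inr[OF sY TD] Gp fs(2) y(1) dom_inr[OF sX _ x] by (metis order_refl subsetD)
  qed
qed

end

context setting
begin

lemma sep:
  assumes "x \<in> topspace X" "x' \<in> topspace X" "x \<noteq> x'"
  shows "\<exists>f\<in>Tdom p X. f x \<noteq> f x'"
proof -
  have "t1_space X" using HX Hausdorff_imp_t1_space by blast
  then have "closedin X {x'}" using assms(2) by (rule closedin_t1_singleton)
  then have W: "openin X (topspace X - {x'})" by (simp add: closedin_def)
  obtain u where u: "u \<in> Tdom p X" "u x = 1" "\<And>z. z \<in> topspace X \<Longrightarrow> z \<notin> topspace X - {x'} \<Longrightarrow> u z \<le> 1/2"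
    using dom_bump[OF sX W, of x "1/2"] assms by auto
  have "u x' \<le> 1/2" using u(3)[of x'] assms(2) by simp
  then show ?thesis using u(1,2) by (intro bexI[of _ u]) auto
qed

lemma exists_y:
  assumes x: "x \<in> topspace X"
  shows "\<exists>y\<in>topspace Y. \<forall>f\<in>Tdom p X. T f y = f x"
proof -
  obtain u0 where u0: "u0 \<in> Tdom p X" "u0 x = 1"
    using dom_bump[OF sX openin_topspace x, of "1/2"] by auto
  define A where "A f = {y \<in> topspace Y. f x \<le> T f y}" for f
  define U where "U = A ` {f \<in> Tdom p X. p = 0 \<longrightarrow> 0 < f x}"
  have cl: "\<forall>C\<in>U. closedin Y C"
    unfolding U_def A_def using closed_ge[OF dom_cont[OF TD]] by blast
  have K: "compactin Y (A u0)"
    unfolding A_def using dom_superlevel[OF sY TD[OF u0(1)], of 1] u0(2) by simp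
  have fipc: "\<forall>F. finite F \<and> F \<subseteq> U \<longrightarrow> A u0 \<inter> \<Inter>F \<noteq> {}"
  proof (intro allI impI)
    fix F assume F: "finite F \<and> F \<subseteq> U"
    then obtain Fs where Fs: "Fs \<subseteq> {f \<in> Tdom p X. p = 0 \<longrightarrow> 0 < f x}" "finite Fs" "F = A ` Fs"
      unfolding U_def by (meson finite_subset_image)
    obtain fl where fl: "set fl = Fs" using finite_list[OF Fs(2)] by blast
    have "\<exists>y\<in>topspace Y. \<forall>f\<in>set (u0 # fl). f x \<le> T f y"
      by (rule fip[OF x u0]) (use Fs fl u0 in auto)
    then obtain y where y: "y \<in> topspace Y" "\<forall>f\<in>set (u0 # fl). f x \<le> T f y" by blast
    have "y \<in> A u0 \<inter> \<Inter>F" using y Fs(3) fl by (auto simp: A_def)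
    then show "A u0 \<inter> \<Inter>F \<noteq> {}" by blast
  qed
  have "A u0 \<inter> \<Inter>U \<noteq> {}" using K[unfolded compactin_fip] cl fipc by blast
  then obtain y where y: "y \<in> A u0" "y \<in> \<Inter>U" by blast
  have yt: "y \<in> topspace Y" using y(1) by (simp add: A_def)
  have good: "f x \<le> T f y" if "f \<in> Tdom p X" "p = 0 \<longrightarrow> 0 < f x" for f
    using y(2) that unfolding U_def A_def by blast
  show ?thesis
  proof (intro bexI[OF _ yt] ballI)
    fix f assume f: "f \<in> Tdom p X"
    show "T f y = f x"
    proof (cases "p = 0 \<longrightarrow> 0 < f x")
      case True
      let ?G = "Gf p u0 x f"
      have Gp: "?G \<in> Tdom p X" "?G x = 1" "\<forall>z\<in>topspace X. psi p [f z, ?G z] \<le> psi p [f x, 1]"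
        using G_props[OF sX u0 x f True] by auto
      have "p = 0 \<longrightarrow> 0 < ?G x" by (simp only: Gp(2) zero_less_one simp_thms)
      then have "1 \<le> T ?G y" using good[OF Gp(1)] Gp(2) by simp
      moreover have "T ?G y \<le> 1" using dom_le1[OF sY TD[OF Gp(1)]] .
      ultimately have TG: "T ?G y = 1" by simp
      have "psi p [T f y, T ?G y] \<le> psi p [f x, 1]" using pair_sup[OF x f Gp yt] .
      then have "T f y \<le> f x" using TG pair_le dom_inr[OF sY TD[OF f] yt] dom_inr[OF sX f x] by metis
      then show ?thesis using good[OF f True] by simp
    next
      case False
      then have p0: "p = 0" and fx: "f x = 0" using dom_nonneg[OF f x] by auto
      have t0: "0 \<le> T f y" using dom_nonneg[OF TD[OF f] yt] .
      have "T f y \<le> 0"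
      proof (rule ccontr)
        assume "\<not> T f y \<le> 0"
        then have tpos: "0 < T f y" by simp
        define d where "d = min (T f y / 2) (1/2)"
        have d: "0 < d" "d \<le> 1/2" "d < T f y" using tpos by (auto simp: d_def)
        have W: "openin X {z \<in> topspace X. f z < d}" using open_lt[OF dom_cont[OF f]] .
        have xW: "x \<in> {z \<in> topspace X. f z < d}" using x fx d by simp
        obtain v where v: "v \<in> Tdom p X" "v x = 1" "\<forall>z. z \<notin> {z \<in> topspace X. f z < d} \<longrightarrow> v z = 0"
          using dom_bump[OF sX W xW, of "1/2"] p0 by auto
        have "1 \<le> T v y" using good[OF v(1)] v(2) by simp
        moreover have "T v y \<le> 1" using dom_le1[OF sY TD[OF v(1)]] .
        ultimately have Tv: "T v y = 1" by simp
        have dr: "inr p d" using d p0 by (simp add: inr_def)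
        have bnd: "supn X (pmean p [f, v]) \<le> pmv p [d, 1]"
        proof (rule supn_least, intro ballI conjI)
          fix z assume z: "z \<in> topspace X"
          show "0 \<le> pmean p [f, v] z" by (simp add: pmean_pmv pmv_ge0)
          have fz: "0 \<le> f z" "f z \<le> 1" using dom_inr[OF sX f z] inr_nonneg inr_le1 by auto
          have vz: "0 \<le> v z" "v z \<le> 1" using dom_inr[OF sX v(1) z] inr_nonneg inr_le1 by auto
          have "f z * v z \<le> d * 1"
          proof (cases "f z < d")
            case True
            have "f z * v z \<le> f z" using fz vz by (simp add: mult_left_le)
            then show ?thesis using True by simp
          next
            case False
            then have "v z = 0" using v(3) z by auto
            then show ?thesis using d by simp
          qed
          then have "psi p [f z, v z] \<le> psi p [d, 1]" using p0 by (simp add: psi_pair)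
          then have "pmv p [f z, v z] \<le> pmv p [d, 1]"
            using dom_inr[OF sX f z] dom_inr[OF sX v(1) z] dr by (subst pmv_le_iff) auto
          then show "pmean p [f, v] z \<le> pmv p [d, 1]" by (simp add: pmean_pmv)
        next
          show "topspace X \<noteq> {}" using x by auto
        qed
        have "pmean p (map T [f, v]) y \<le> supn Y (pmean p (map T [f, v]))"
          using f v(1) yt by (intro Y_le) auto
        also have "\<dots> = supn X (pmean p [f, v])" using f v(1) by (intro Tpres) auto
        finally have "pmv p [T f y, 1] \<le> pmv p [d, 1]" using bnd Tv by (simp add: pmean_pmv)
        then have "psi p [T f y, 1] \<le> psi p [d, 1]"
          using dom_inr[OF sY TD[OF f] yt] dr by (subst (asm) pmv_le_iff) auto
        then have "T f y \<le> d" using p0 by (simp add: psi_pair)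
        then show False using d by simp
      qed
      then show ?thesis using t0 fx by simp
    qed
  qed
qed

definition Y0 where "Y0 = {y \<in> topspace Y. \<exists>x\<in>topspace X. \<forall>f\<in>Tdom p X. T f y = f x}"
definition Zs where "Zs C = {y \<in> topspace Y. \<exists>x\<in>C. \<forall>f\<in>Tdom p X. T f y = f x}"
definition tau where "tau y = (THE x. x \<in> topspace X \<and> (\<forall>f\<in>Tdom p X. T f y = f x))"

lemma uniq: "x1 \<in> topspace X \<Longrightarrow> x2 \<in> topspace X \<Longrightarrow> \<forall>f\<in>Tdom p X. f x1 = f x2 \<Longrightarrow> x1 = x2"
  using sep by blast

lemma tau_eq:
  assumes "y \<in> topspace Y" "x \<in> topspace X" "\<forall>f\<in>Tdom p X. T f y = f x"
  shows "y \<in> Y0 \<and> tau y = x"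
proof
  show "y \<in> Y0" using assms by (auto simp: Y0_def)
  show "tau y = x" unfolding tau_def
  proof (rule the_equality)
    show "x \<in> topspace X \<and> (\<forall>f\<in>Tdom p X. T f y = f x)" using assms by blast
    fix x' assume "x' \<in> topspace X \<and> (\<forall>f\<in>Tdom p X. T f y = f x')"
    then have "\<forall>f\<in>Tdom p X. f x' = f x" using assms(3) by auto
    then show "x' = x" using uniq[of x' x] assms(2) \<open>x' \<in> topspace X \<and> _\<close> by blast
  qed
qed

lemma tau:
  assumes "y \<in> Y0"
  shows "tau y \<in> topspace X \<and> (\<forall>f\<in>Tdom p X. T f y = f (tau y))"
proof -
  obtain x where x: "y \<in> topspace Y" "x \<in> topspace X" "\<forall>f\<in>Tdom p X. T f y = f x"
    using assms by (auto simp: Y0_def)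
  then show ?thesis using tau_eq[OF x] by simp
qed

lemma tau_surj: "tau ` Y0 = topspace X"
proof
  show "tau ` Y0 \<subseteq> topspace X" using tau by blast
  show "topspace X \<subseteq> tau ` Y0"
  proof
    fix x assume x: "x \<in> topspace X"
    obtain y where y: "y \<in> topspace Y" "\<forall>f\<in>Tdom p X. T f y = f x" using exists_y[OF x] by blast
    then show "x \<in> tau ` Y0" using tau_eq[OF y(1) x y(2)] by force
  qed
qed

lemma Y0_sub: "Y0 \<subseteq> topspace Y" by (auto simp: Y0_def)

lemma Zs_sub: "C \<subseteq> topspace X \<Longrightarrow> Zs C \<subseteq> Y0" by (auto simp: Zs_def Y0_def)

lemma Y0_Zs: "Y0 = Zs (topspace X)" by (simp add: Y0_def Zs_def)

lemma Zs_closed: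
  assumes C: "compactin X C"
  shows "closedin Y (Zs C)"
  unfolding closedin_def
proof
  show "Zs C \<subseteq> topspace Y" by (auto simp: Zs_def)
  show "openin Y (topspace Y - Zs C)"
  proof (subst openin_subopen, intro ballI)
    fix y assume y: "y \<in> topspace Y - Zs C"
    have "\<forall>x\<in>C. \<exists>f\<in>Tdom p X. T f y \<noteq> f x" using y by (auto simp: Zs_def)
    then obtain F where F: "\<And>x. x \<in> C \<Longrightarrow> F x \<in> Tdom p X \<and> T (F x) y \<noteq> F x x" by metis
    define e where "e x = \<bar>T (F x) y - F x x\<bar>" for x
    have e0: "x \<in> C \<Longrightarrow> 0 < e x" for x using F by (auto simp: e_def)
    define V where "V x = {x' \<in> topspace X. \<bar>F x x' - F x x\<bar> < e x / 2}" for x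
    have Vo: "openin X (V x)" if xC: "x \<in> C" for x
    proof -
      have dc: "continuous_map X euclideanreal (F x)" using F[OF xC] dom_cont by blast
      have "continuous_map X euclideanreal (\<lambda>x'. \<bar>F x x' - F x x\<bar>)"
        by (intro continuous_map_real_abs continuous_map_diff) (simp_all add: dc)
      then show ?thesis unfolding V_def by (rule open_lt)
    qed
    have CV: "C \<subseteq> \<Union>(V ` C)"
    proof
      fix x assume "x \<in> C"
      then show "x \<in> \<Union>(V ` C)" using e0 C compactin_subset_topspace by (force simp: V_def)
    qed
    obtain G where G: "finite G" "G \<subseteq> V ` C" "C \<subseteq> \<Union>G"
      using C[unfolded compactin_def] Vo CV by (metis (no_types, lifting) imageE)
    then obtain P where P: "P \<subseteq> C" "finite P" "G = V ` P" by (meson finite_subset_image)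
    define W where "W = (\<Inter>x\<in>P. {y' \<in> topspace Y. \<bar>T (F x) y' - T (F x) y\<bar> < e x / 2}) \<inter> topspace Y"
    have Wi: "openin Y {y' \<in> topspace Y. \<bar>T (F x) y' - T (F x) y\<bar> < e x / 2}" if xP: "x \<in> P" for x
    proof -
      have dc: "continuous_map Y euclideanreal (T (F x))" using F xP P(1) dom_cont TD by blast
      have "continuous_map Y euclideanreal (\<lambda>y'. \<bar>T (F x) y' - T (F x) y\<bar>)"
        by (intro continuous_map_real_abs continuous_map_diff) (simp_all add: dc)
      then show ?thesis by (rule open_lt)
    qed
    have Wo: "openin Y W" unfolding W_def using P(2) Wi by (rule openin_INT)
    have yW: "y \<in> W" using y P e0 by (auto simp: W_def)
    have "W \<subseteq> topspace Y - Zs C"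
    proof
      fix y' assume y': "y' \<in> W"
      show "y' \<in> topspace Y - Zs C"
      proof (rule ccontr)
        assume "y' \<notin> topspace Y - Zs C"
        then obtain x' where x': "x' \<in> C" "\<forall>f\<in>Tdom p X. T f y' = f x'" using y' by (auto simp: Zs_def W_def)
        then obtain x where x: "x \<in> P" "x' \<in> V x" using G P by auto
        have xC: "x \<in> C" using x P by auto
        have 1: "\<bar>F x x' - F x x\<bar> < e x / 2" using x(2) by (simp add: V_def)
        have 2: "\<bar>T (F x) y' - T (F x) y\<bar> < e x / 2" using y' x(1) by (auto simp: W_def)
        have 3: "T (F x) y' = F x x'" using x' F[OF xC] by blast
        have tri: "\<bar>T (F x) y - F x x\<bar> \<le> \<bar>T (F x) y' - T (F x) y\<bar> + \<bar>F x x' - F x x\<bar>"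
          using abs_triangle_ineq[of "T (F x) y - T (F x) y'" "T (F x) y' - F x x"] 3
          by (simp add: abs_minus_commute)
        have g: "\<And>A B C::real. B < A/2 \<Longrightarrow> C < A/2 \<Longrightarrow> A \<le> C + B \<Longrightarrow> A < A" by linarith
        have "e x < e x" unfolding e_def by (rule g[OF 1[unfolded e_def] 2[unfolded e_def] tri])
        then show False by simp
      qed
    qed
    then show "\<exists>T. openin Y T \<and> y \<in> T \<and> T \<subseteq> topspace Y - Zs C" using Wo yW by blast
  qed
qed

end

context setting
begin

lemma tau_cont: "continuous_map (subtopology Y Y0) X tau"
  unfolding continuous_map_def
proof (intro conjI allI impI)
  have ts: "topspace (subtopology Y Y0) = Y0" using Y0_sub by auto
  show "tau \<in> topspace (subtopology Y Y0) \<rightarrow> topspace X" using ts tau by auto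
  fix U assume U: "openin X U"
  show "openin (subtopology Y Y0) {y \<in> topspace (subtopology Y Y0). tau y \<in> U}"
  proof (subst openin_subopen, intro ballI)
    fix y assume y: "y \<in> {y \<in> topspace (subtopology Y Y0). tau y \<in> U}"
    then have yY0: "y \<in> Y0" and tU: "tau y \<in> U" using ts by auto
    obtain f where f: "f \<in> Tdom p X" "f (tau y) = 1" "\<And>z. z \<in> topspace X \<Longrightarrow> z \<notin> U \<Longrightarrow> f z \<le> 1/2"
    proof (rule dom_bump[OF sX U tU, of "1/2"])
      fix u assume "u \<in> Tdom p X" "u (tau y) = 1" "\<And>z. z \<in> topspace X \<Longrightarrow> z \<notin> U \<Longrightarrow> u z \<le> 1/2"
      then show thesis by (rule that)
    qed simp_all
    define N where "N = {y' \<in> topspace Y. 1/2 < T f y'}"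
    have No: "openin Y N" unfolding N_def by (rule open_gt[OF dom_cont[OF TD[OF f(1)]]])
    show "\<exists>S. openin (subtopology Y Y0) S \<and> y \<in> S \<and> S \<subseteq> {y \<in> topspace (subtopology Y Y0). tau y \<in> U}"
    proof (intro exI conjI)
      show "openin (subtopology Y Y0) (N \<inter> Y0)" using No by (rule openin_subtopology_Int)
      show "y \<in> N \<inter> Y0" using yY0 tau[OF yY0] f(1,2) Y0_sub by (auto simp: N_def)
      show "N \<inter> Y0 \<subseteq> {y \<in> topspace (subtopology Y Y0). tau y \<in> U}"
      proof
        fix y' assume y': "y' \<in> N \<inter> Y0"
        then have "f (tau y') > 1/2" using tau[of y'] f(1) by (auto simp: N_def)
        then have "tau y' \<in> U" using f(3) tau[of y'] y' by force
        then show "y' \<in> {y \<in> topspace (subtopology Y Y0). tau y \<in> U}" using y' ts by auto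
      qed
    qed
  qed
qed

lemma Y0_closed: "compact_space X \<Longrightarrow> closedin Y Y0"
  using Zs_closed[of "topspace X"] Y0_Zs by (simp add: compact_space_def)

lemma Y0_lc: "locally_compact_space (subtopology Y Y0)"
  unfolding locally_compact_space_def
proof
  fix y assume "y \<in> topspace (subtopology Y Y0)"
  then have y: "y \<in> Y0" using Y0_sub by auto
  have tx: "tau y \<in> topspace X" using tau[OF y] by blast
  obtain f where f: "f \<in> Tdom p X" "f (tau y) = 1"
    using dom_bump[OF sX openin_topspace tx, of "1/2"] by auto
  define C where "C = {x \<in> topspace X. 1/2 \<le> f x}"
  have Cc: "compactin X C" unfolding C_def by (rule dom_superlevel[OF sX f(1)]) simp
  define K where "K = Zs C \<inter> {y' \<in> topspace Y. 1/2 \<le> T f y'}"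
  have Kc: "compactin Y K"
  proof -
    have cl: "closedin Y K" unfolding K_def
      using Zs_closed[OF Cc] closed_ge[OF dom_cont[OF TD[OF f(1)]]] by (rule closedin_Int)
    have cK: "compactin Y {y' \<in> topspace Y. 1/2 \<le> T f y'}" by (rule dom_superlevel[OF sY TD[OF f(1)]]) simp
    have sub: "K \<subseteq> {y' \<in> topspace Y. 1/2 \<le> T f y'}" by (auto simp: K_def)
    show ?thesis by (rule closed_compactin[OF cK sub cl])
  qed
  have KY0: "K \<subseteq> Y0" unfolding K_def using Zs_sub[of C] by (auto simp: C_def)
  define U where "U = {y' \<in> topspace Y. 1/2 < T f y'} \<inter> Y0"
  show "\<exists>U K. openin (subtopology Y Y0) U \<and> compactin (subtopology Y Y0) K \<and> y \<in> U \<and> U \<subseteq> K"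
  proof (intro exI conjI)
    show "openin (subtopology Y Y0) U" unfolding U_def
      by (rule openin_subtopology_Int[OF open_gt[OF dom_cont[OF TD[OF f(1)]]]])
    show "compactin (subtopology Y Y0) K" using Kc KY0 by (simp add: compactin_subtopology)
    show "y \<in> U" using y tau[OF y] f Y0_sub by (auto simp: U_def)
    show "U \<subseteq> K"
    proof
      fix y' assume y': "y' \<in> U"
      then have y'0: "y' \<in> Y0" and gt: "1/2 < T f y'" and y't: "y' \<in> topspace Y" by (auto simp: U_def)
      have tt: "tau y' \<in> topspace X" "\<forall>g\<in>Tdom p X. T g y' = g (tau y')" using tau[OF y'0] by auto
      then have "tau y' \<in> C" using gt f(1) by (auto simp: C_def)
      then have "y' \<in> Zs C" using tt y't by (auto simp: Zs_def)
      then show "y' \<in> K" using gt y't by (auto simp: K_def)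
    qed
  qed
qed

end

lemma compC0c:
  assumes hm: "homeomorphic_maps Y X \<tau> \<sigma>" and f: "f \<in> C0c X"
  shows "(\<lambda>y. if y \<in> topspace Y then f (\<tau> y) else 0) \<in> C0c Y"
proof -
  have ct: "continuous_map Y X \<tau>" and cs: "continuous_map X Y \<sigma>"
    and st: "\<And>y. y \<in> topspace Y \<Longrightarrow> \<sigma> (\<tau> y) = y" and ts: "\<And>x. x \<in> topspace X \<Longrightarrow> \<tau> (\<sigma> x) = x"
    using hm by (auto simp: homeomorphic_maps_def)
  have tY: "\<And>y. y \<in> topspace Y \<Longrightarrow> \<tau> y \<in> topspace X" using continuous_map_image_subset_topspace[OF ct] by blast
  have sX: "\<And>x. x \<in> topspace X \<Longrightarrow> \<sigma> x \<in> topspace Y" using continuous_map_image_subset_topspace[OF cs] by blast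
  have fc: "continuous_map X euclidean f" and fK: "\<And>e. e > 0 \<Longrightarrow> compactin X {x \<in> topspace X. e \<le> cmod (f x)}"
    and f0: "\<And>x. x \<notin> topspace X \<Longrightarrow> f x = 0"
    using f by (auto simp: C0c_def)
  have c: "continuous_map Y euclidean (\<lambda>y. if y \<in> topspace Y then f (\<tau> y) else 0)"
  proof (rule continuous_map_eq)
    show "continuous_map Y euclidean (f \<circ> \<tau>)" using ct fc by (rule continuous_map_compose)
  qed simp
  have K: "compactin Y {y \<in> topspace Y. e \<le> cmod (if y \<in> topspace Y then f (\<tau> y) else 0)}" if e: "e > 0" for e
  proof -
    have eq: "{y \<in> topspace Y. e \<le> cmod (if y \<in> topspace Y then f (\<tau> y) else 0)} = \<sigma> ` {x \<in> topspace X. e \<le> cmod (f x)}"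
    proof
      show "{y \<in> topspace Y. e \<le> cmod (if y \<in> topspace Y then f (\<tau> y) else 0)} \<subseteq> \<sigma> ` {x \<in> topspace X. e \<le> cmod (f x)}"
      proof
        fix y assume y: "y \<in> {y \<in> topspace Y. e \<le> cmod (if y \<in> topspace Y then f (\<tau> y) else 0)}"
        then have "y = \<sigma> (\<tau> y)" "\<tau> y \<in> {x \<in> topspace X. e \<le> cmod (f x)}" using st tY by auto
        then show "y \<in> \<sigma> ` {x \<in> topspace X. e \<le> cmod (f x)}" by blast
      qed
      show "\<sigma> ` {x \<in> topspace X. e \<le> cmod (f x)} \<subseteq> {y \<in> topspace Y. e \<le> cmod (if y \<in> topspace Y then f (\<tau> y) else 0)}"
        using sX ts by auto
    qed
    show ?thesis unfolding eq using fK[OF e] cs by (rule image_compactin)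
  qed
  show ?thesis unfolding C0c_def using c K by auto
qed

lemma star_iso:
  assumes "homeomorphic_map Y X \<tau>"
  shows "star_alg_iso X Y (\<lambda>f y. if y \<in> topspace Y then f (\<tau> y) else 0)"
proof -
  obtain \<sigma> where hm: "homeomorphic_maps Y X \<tau> \<sigma>" using assms homeomorphic_map_maps by blast
  then have hm': "homeomorphic_maps X Y \<sigma> \<tau>" using homeomorphic_maps_sym by blast
  have ct: "continuous_map Y X \<tau>" and cs: "continuous_map X Y \<sigma>"
    and st: "\<And>y. y \<in> topspace Y \<Longrightarrow> \<sigma> (\<tau> y) = y" and ts: "\<And>x. x \<in> topspace X \<Longrightarrow> \<tau> (\<sigma> x) = x"
    using hm by (auto simp: homeomorphic_maps_def)
  have tY: "\<And>y. y \<in> topspace Y \<Longrightarrow> \<tau> y \<in> topspace X" using continuous_map_image_subset_topspace[OF ct] by blast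
  have sX: "\<And>x. x \<in> topspace X \<Longrightarrow> \<sigma> x \<in> topspace Y" using continuous_map_image_subset_topspace[OF cs] by blast
  let ?P = "\<lambda>f y. if y \<in> topspace Y then f (\<tau> y) else 0 :: complex"
  have inj: "inj_on ?P (C0c X)"
  proof (rule inj_onI)
    fix f g assume f: "f \<in> C0c X" and g: "g \<in> C0c X" and eq: "?P f = ?P g"
    show "f = g"
    proof
      fix x show "f x = g x"
      proof (cases "x \<in> topspace X")
        case True
        have e1: "?P f (\<sigma> x) = ?P g (\<sigma> x)" using eq by (rule fun_cong)
        have "\<sigma> x \<in> topspace Y" using sX True by blast
        then have "f (\<tau> (\<sigma> x)) = g (\<tau> (\<sigma> x))" using e1 by simp
        then show ?thesis using ts True by simp
      next
        case False then show ?thesis using f g by (simp add: C0c_def)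
      qed
    qed
  qed
  have img: "?P ` C0c X = C0c Y"
  proof
    show "?P ` C0c X \<subseteq> C0c Y" using compC0c[OF hm] by blast
    show "C0c Y \<subseteq> ?P ` C0c X"
    proof
      fix h assume h: "h \<in> C0c Y"
      define f where "f = (\<lambda>x. if x \<in> topspace X then h (\<sigma> x) else 0)"
      have fC: "f \<in> C0c X" unfolding f_def using compC0c[OF hm' h] .
      have "?P f = h"
      proof
        fix y show "?P f y = h y"
        proof (cases "y \<in> topspace Y")
          case True then show ?thesis using tY st by (simp add: f_def)
        next
          case False then show ?thesis using h by (simp add: C0c_def)
        qed
      qed
      then show "h \<in> ?P ` C0c X" using fC by blast
    qed
  qed
  show ?thesis unfolding star_alg_iso_def using inj img
    by (auto simp: bij_betw_def fun_eq_iff)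
qed

lemma absD: "\<bar>a - b\<bar> < (c::real) \<Longrightarrow> a < b + c \<and> b < a + c"
  by (auto simp: abs_less_iff)

locale dsetting = setting +
  assumes dense: "\<forall>g \<in> Tdom p Y. \<forall>e>0. \<exists>f \<in> Tdom p X. supn Y (\<lambda>y. T f y - g y) < e"
begin

lemma approx:
  assumes g: "g \<in> Tdom p Y" and e: "e > 0"
  shows "\<exists>f\<in>Tdom p X. \<forall>y\<in>topspace Y. \<bar>T f y - g y\<bar> < e"
proof -
  obtain f where f: "f \<in> Tdom p X" "supn Y (\<lambda>y. T f y - g y) < e" using dense g e by blast
  have "\<bar>T f y - g y\<bar> < e" if y: "y \<in> topspace Y" for y
  proof -
    have ne: "topspace Y \<noteq> {}" using y by auto
    have b: "\<bar>T f z - g z\<bar> \<le> 1" if z: "z \<in> topspace Y" for z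
    proof -
      have a: "inr p (T f z)" "inr p (g z)" using dom_inr[OF sY TD[OF f(1)] z] dom_inr[OF sY g z] by auto
      have "0 \<le> T f z" "T f z \<le> 1" "0 \<le> g z" "g z \<le> 1"
        using inr_nonneg[OF a(1)] inr_le1[OF a(1)] inr_nonneg[OF a(2)] inr_le1[OF a(2)] by auto
      then show ?thesis by (simp add: abs_le_iff)
    qed
    have "bdd_above ((\<lambda>z. \<bar>T f z - g z\<bar>) ` topspace Y)" using b by (auto intro!: bdd_aboveI2)
    then have "\<bar>T f y - g y\<bar> \<le> Sup ((\<lambda>z. \<bar>T f z - g z\<bar>) ` topspace Y)" using y by (simp add: cSup_upper)
    also have "\<dots> = supn Y (\<lambda>y. T f y - g y)" using ne by (simp add: supn_def)
    finally show ?thesis using f(2) by simp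
  qed
  then show ?thesis using f(1) by blast
qed

lemma bumpY:
  assumes W: "openin Y W" and y: "y \<in> W"
  shows "\<exists>g\<in>Tdom p Y. g y = 1 \<and> (\<forall>z\<in>topspace Y. z \<notin> W \<longrightarrow> g z \<le> 1/4)"
proof (rule dom_bump[OF sY W y, of "1/4"])
  fix u assume "u \<in> Tdom p Y" "u y = 1" "\<And>z. z \<in> topspace Y \<Longrightarrow> z \<notin> W \<Longrightarrow> u z \<le> 1/4"
  then show ?thesis by blast
qed simp_all

lemma Y0_all: "Y0 = topspace Y"
proof
  show "Y0 \<subseteq> topspace Y" by (rule Y0_sub)
  show "topspace Y \<subseteq> Y0"
  proof
    fix y assume y: "y \<in> topspace Y"
    obtain g0 where g0: "g0 \<in> Tdom p Y" "g0 y = 1" using bumpY[OF openin_topspace y] by blast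
    obtain f0 where f0: "f0 \<in> Tdom p X" "\<forall>y'\<in>topspace Y. \<bar>T f0 y' - g0 y'\<bar> < 1/4"
      using approx[OF g0(1)] by (meson divide_pos_pos zero_less_one zero_less_numeral)
    define C where "C = {x \<in> topspace X. 1/2 \<le> f0 x}"
    have Cc: "compactin X C" unfolding C_def by (rule dom_superlevel[OF sX f0(1)]) simp
    have "y \<in> Zs C"
    proof (rule ccontr)
      assume yn: "y \<notin> Zs C"
      have No: "openin Y (topspace Y - Zs C)" using Zs_closed[OF Cc] by (simp add: closedin_def)
      define V where "V = (topspace Y - Zs C) \<inter> {y' \<in> topspace Y. 3/4 < g0 y'}"
      have Vo: "openin Y V" unfolding V_def using No open_gt[OF dom_cont[OF g0(1)]] by (rule openin_Int)
      have yV: "y \<in> V" using y yn g0(2) by (simp add: V_def)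
      obtain g1 where g1: "g1 \<in> Tdom p Y" "g1 y = 1" "\<forall>z\<in>topspace Y. z \<notin> V \<longrightarrow> g1 z \<le> 1/4"
        using bumpY[OF Vo yV] by blast
      obtain f1 where f1: "f1 \<in> Tdom p X" "\<forall>y'\<in>topspace Y. \<bar>T f1 y' - g1 y'\<bar> < 1/4"
        using approx[OF g1(1)] by (meson divide_pos_pos zero_less_one zero_less_numeral)
      obtain x1 where x1: "x1 \<in> topspace X" "f1 x1 = 1" using dom_props[OF sX f1(1)] by blast
      obtain y1 where y1: "y1 \<in> Y0" "tau y1 = x1" using tau_surj x1(1) by (metis imageE)
      have y1t: "y1 \<in> topspace Y" using y1(1) Y0_sub by blast
      have "T f1 y1 = 1" using tau[OF y1(1)] f1(1) y1(2) x1(2) by auto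
      moreover have "\<bar>T f1 y1 - g1 y1\<bar> < 1/4" using f1(2) y1t by blast
      ultimately have "3/4 < g1 y1" using absD by fastforce
      then have y1V: "y1 \<in> V" using g1(3) y1t by force
      then have "3/4 < g0 y1" by (simp add: V_def)
      moreover have "\<bar>T f0 y1 - g0 y1\<bar> < 1/4" using f0(2) y1t by blast
      ultimately have "1/2 < T f0 y1" using absD by fastforce
      then have "1/2 < f0 (tau y1)" using tau[OF y1(1)] f0(1) by auto
      then have "tau y1 \<in> C" using tau[OF y1(1)] by (auto simp: C_def)
      then have "y1 \<in> Zs C" using tau[OF y1(1)] y1t by (auto simp: Zs_def)
      then show False using y1V by (simp add: V_def)
    qed
    then show "y \<in> Y0" using Zs_sub[of C] by (auto simp: C_def)
  qed
qed

lemma tau_inj: "inj_on tau (topspace Y)"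
proof (rule inj_onI, rule ccontr)
  fix y1 y2 assume y1: "y1 \<in> topspace Y" and y2: "y2 \<in> topspace Y" and eq: "tau y1 = tau y2" and ne: "y1 \<noteq> y2"
  have "t1_space Y" using HY Hausdorff_imp_t1_space by blast
  then have "closedin Y {y2}" using y2 by (rule closedin_t1_singleton)
  then have W: "openin Y (topspace Y - {y2})" by (simp add: closedin_def)
  obtain g where g: "g \<in> Tdom p Y" "g y1 = 1" "\<forall>z\<in>topspace Y. z \<notin> topspace Y - {y2} \<longrightarrow> g z \<le> 1/4"
    using bumpY[OF W] y1 ne by blast
  obtain f where f: "f \<in> Tdom p X" "\<forall>y'\<in>topspace Y. \<bar>T f y' - g y'\<bar> < 1/4"
    using approx[OF g(1)] by (meson divide_pos_pos zero_less_one zero_less_numeral)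
  have e: "T f y1 = T f y2" using tau[of y1] tau[of y2] Y0_all y1 y2 eq f(1) by auto
  have a1: "\<bar>T f y1 - g y1\<bar> < 1/4" using f(2) y1 by blast
  have t1: "3/4 < T f y1" using a1 g(2) absD by fastforce
  have g2: "g y2 \<le> 1/4" using g(3) y2 by auto
  have a2: "\<bar>T f y2 - g y2\<bar> < 1/4" using f(2) y2 by blast
  have t2: "T f y2 < 1/2" using a2 g2 absD by fastforce
  show False using e t1 t2 by simp
qed

lemma tau_open: "open_map Y X tau"
  unfolding open_map_def
proof (intro allI impI)
  fix U assume U: "openin Y U"
  have Ut: "U \<subseteq> topspace Y" using U openin_subset by blast
  show "openin X (tau ` U)"
  proof (subst openin_subopen, intro ballI)
    fix x assume "x \<in> tau ` U"
    then obtain y where y: "y \<in> U" "x = tau y" by blast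
    have yY0: "y \<in> Y0" using y Ut Y0_all by blast
    obtain g where g: "g \<in> Tdom p Y" "g y = 1" "\<forall>z\<in>topspace Y. z \<notin> U \<longrightarrow> g z \<le> 1/4"
      using bumpY[OF U y(1)] by blast
    obtain f where f: "f \<in> Tdom p X" "\<forall>y'\<in>topspace Y. \<bar>T f y' - g y'\<bar> < 1/4"
      using approx[OF g(1)] by (meson divide_pos_pos zero_less_one zero_less_numeral)
    define N where "N = {x' \<in> topspace X. 1/2 < f x'}"
    show "\<exists>N. openin X N \<and> x \<in> N \<and> N \<subseteq> tau ` U"
    proof (intro exI conjI)
      show "openin X N" unfolding N_def by (rule open_gt[OF dom_cont[OF f(1)]])
      have "\<bar>T f y - g y\<bar> < 1/4" using f(2) y(1) Ut by blast
      then have "3/4 < T f y" using g(2) absD by fastforce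
      then show "x \<in> N" using tau[OF yY0] f(1) y(2) by (auto simp: N_def)
      show "N \<subseteq> tau ` U"
      proof
        fix x' assume x': "x' \<in> N"
        then obtain y' where y': "y' \<in> Y0" "x' = tau y'" using tau_surj by (auto simp: N_def)
        have y't: "y' \<in> topspace Y" using y'(1) Y0_sub by blast
        have "T f y' = f x'" using tau[OF y'(1)] f(1) y'(2) by auto
        then have "1/2 < T f y'" using x' by (simp add: N_def)
        moreover have "\<bar>T f y' - g y'\<bar> < 1/4" using f(2) y't by blast
        ultimately have "1/4 < g y'" using absD by fastforce
        then have "y' \<in> U" using g(3) y't by force
        then show "x' \<in> tau ` U" using y'(2) by blast
      qed
    qed
  qed
qed

lemma tau_homeo: "homeomorphic_map Y X tau"
proof (rule bijective_open_imp_homeomorphic_map)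
  show "continuous_map Y X tau" using tau_cont Y0_all by simp
  show "open_map Y X tau" by (rule tau_open)
  show "tau ` topspace Y = topspace X" using tau_surj Y0_all by simp
  show "inj_on tau (topspace Y)" by (rule tau_inj)
qed

end

context setting
begin

lemma main:
  shows "\<exists>Y0 \<tau>. Y0 \<subseteq> topspace Y
           \<and> locally_compact_space (subtopology Y Y0)
           \<and> (compact_space X \<longrightarrow> closedin Y Y0)
           \<and> continuous_map (subtopology Y Y0) X \<tau>
           \<and> \<tau> ` Y0 = topspace X
           \<and> (\<forall>f \<in> Tdom p X. \<forall>y \<in> Y0. T f y = f (\<tau> y))
           \<and> ((\<forall>g \<in> Tdom p Y. \<forall>e>0. \<exists>f \<in> Tdom p X. supn Y (\<lambda>y. T f y - g y) < e)
               \<longrightarrow> Y0 = topspace Y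
                 \<and> homeomorphic_map Y X \<tau>
                 \<and> star_alg_iso X Y (\<lambda>f y. if y \<in> topspace Y then f (\<tau> y) else 0)
                 \<and> (\<forall>f \<in> Tdom p X. (\<lambda>y. complex_of_real (T f y)) =
                       (\<lambda>y. if y \<in> topspace Y then complex_of_real (f (\<tau> y)) else 0)))"
proof (intro exI[of _ Y0] exI[of _ tau] conjI impI)
  show "Y0 \<subseteq> topspace Y" by (rule Y0_sub)
  show "locally_compact_space (subtopology Y Y0)" by (rule Y0_lc)
  show "closedin Y Y0" if "compact_space X" using Y0_closed that .
  show "continuous_map (subtopology Y Y0) X tau" by (rule tau_cont)
  show "tau ` Y0 = topspace X" by (rule tau_surj)
  show "\<forall>f \<in> Tdom p X. \<forall>y \<in> Y0. T f y = f (tau y)" using tau by blast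
  assume D: "\<forall>g \<in> Tdom p Y. \<forall>e>0. \<exists>f \<in> Tdom p X. supn Y (\<lambda>y. T f y - g y) < e"
  interpret d: dsetting p X Y T by (unfold_locales) (rule D)
  show "Y0 = topspace Y" by (rule d.Y0_all)
  show "homeomorphic_map Y X tau" by (rule d.tau_homeo)
  show "star_alg_iso X Y (\<lambda>f y. if y \<in> topspace Y then f (tau y) else 0)" by (rule star_iso[OF d.tau_homeo])
  show "\<forall>f \<in> Tdom p X. (\<lambda>y. complex_of_real (T f y)) =
         (\<lambda>y. if y \<in> topspace Y then complex_of_real (f (tau y)) else 0)"
  proof (intro ballI ext)
    fix f y assume f: "f \<in> Tdom p X"
    show "complex_of_real (T f y) = (if y \<in> topspace Y then complex_of_real (f (tau y)) else 0)"
    proof (cases "y \<in> topspace Y")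
      case True then show ?thesis using tau[of y] d.Y0_all f by auto
    next
      case False then show ?thesis using dom_off[OF TD[OF f] False] by simp
    qed
  qed
qed

end

theorem mainTheorem11:
  fixes p :: real and X :: "'a topology" and Y :: "'b topology"
    and T :: "('a \<Rightarrow> real) \<Rightarrow> ('b \<Rightarrow> real)"
  assumes HX: "Hausdorff_space X" and HY: "Hausdorff_space Y"
    and spX: "if p \<ge> 0 then locally_compact_space X else compact_space X"
    and spY: "if p \<ge> 0 then locally_compact_space Y else compact_space Y"
    and Tmap: "T ` Tdom p X \<subseteq> Tdom p Y"
    and Tpres: "\<And>fs. fs \<noteq> [] \<Longrightarrow> set fs \<subseteq> Tdom p X \<Longrightarrow>
                  supn Y (pmean p (map T fs)) = supn X (pmean p fs)"
  shows "\<exists>Y0 \<tau>. Y0 \<subseteq> topspace Y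
           \<and> locally_compact_space (subtopology Y Y0)
           \<and> (compact_space X \<longrightarrow> closedin Y Y0)
           \<and> continuous_map (subtopology Y Y0) X \<tau>
           \<and> \<tau> ` Y0 = topspace X
           \<and> (\<forall>f \<in> Tdom p X. \<forall>y \<in> Y0. T f y = f (\<tau> y))
           \<and> ((\<forall>g \<in> Tdom p Y. \<forall>e>0. \<exists>f \<in> Tdom p X. supn Y (\<lambda>y. T f y - g y) < e)
               \<longrightarrow> Y0 = topspace Y
                 \<and> homeomorphic_map Y X \<tau>
                 \<and> star_alg_iso X Y (\<lambda>f y. if y \<in> topspace Y then f (\<tau> y) else 0)
                 \<and> (\<forall>f \<in> Tdom p X. (\<lambda>y. complex_of_real (T f y)) =
                       (\<lambda>y. if y \<in> topspace Y then complex_of_real (f (\<tau> y)) else 0)))"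
proof -
  have S: "setting p X Y T" using HX HY spX spY Tmap Tpres by (rule setting.intro)
  show ?thesis by (rule setting.main[OF S])
qed

end
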